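(* For every initial condition $z(0,0)\in\Lambda$ there exists a complete solution $z=(x,\sigma)$ of the hybrid system $\mathcal H=(C,f,D,g)$.
   Context: Network model. $(N,E)$ is a connected directed graph with $N=\{1,\dots,|N|\}$, $E\subseteq N\times N$, with arbitrary orientation: if $(i,j)\in E$ then $(j,i)\notin E$. For $j\in N$, "$i:i\to j$" ranges over $i$ with $(i,j)\in E$ and "$k:j\to k$" over $k$ with $(j,k)\in E$. Constants: $M_j>0$, $p^L_j\in\mathbb{R}$ ($j\in N$), $B_{ij}>0$ ($(i,j)\in E$). Continuous state $x=(\eta,\omega,x^s)\in\mathbb{R}^n$ with $\eta_{ij}\in\mathbb{R}$ ($(i,j)\in E$), $\omega_j\in\mathbb{R}$, $x^s_j\in\mathbb{R}^{n_j}$ ($j\in N$), $n=|E|+|N|+\sum_jn_j$; $p_{ij}=B_{ij}\sin\eta_{ij}$, $s_j=g_j(x^s_j,-\omega_j)$, where $f_j:\mathbb{R}^{n_j}\times\mathbb{R}\to\mathbb{R}^{n_j}$, $g_j:\mathbb{R}^{n_j}\times\mathbb{R}\to\mathbb{R}$ are globally Lipschitz. Hysteretic loads as a hybrid system. For each $j$ constants $\overline d_j\ge0$ and thresholds $\omega^1_j>\omega^0_j>0$ are given. ${\rm sgn}(a)=1$ if $a\ge0$ and $-1$ otherwise. The discrete state is $\sigma\in P^{|N|}$, $P=\{-1,0,1\}$, and $z=(x,\sigma)$. Let $\mathcal I_j(\omega_j)=\{{\rm sgn}(\omega_j)\}$ if $|\omega_j|>\omega^1_j$, $\{0\}$ if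 $|\omega_j|<\omega^0_j$, $\{0,{\rm sgn}(\omega_j)\}$ if $\omega^0_j\le|\omega_j|\le\omega^1_j$; $\Lambda=C=\{z\in\mathbb{R}^n\times P^{|N|}:\sigma_j\in\mathcal I_j(\omega_j)\ \forall j\}$. Flow map $f$ on $C$: $\dot\eta_{ij}=\omega_i-\omega_j$; $M_j\dot\omega_j=-p^L_j+s_j-\overline d_j\sigma_j-\sum_{k:j\to k}p_{jk}+\sum_{i:i\to j}p_{ij}$; $\dot x^s_j=f_j(x^s_j,-\omega_j)$; $\dot\sigma_j=0$. Jump set $D$: the set of $z\in\Lambda$ such that for some $j$, either ($|\omega_j|=\omega^1_j$ and $\sigma_j=0$) or ($|\omega_j|=\omega^0_j$ and $\sigma_j={\rm sgn}(\omega_j)$). Jump map $g$ on $D$: $x^+=x$; $\sigma_j^+={\rm sgn}(\omega_j)$ if $|\omega_j|=\omega^1_j$ and $\sigma_j=0$, $\sigma_j^+=0$ if $|\omega_j|=\omega^0_j$ and $\sigma_j={\rm sgn}(\omega_j)$, $\sigma_j^+=\sigma_j$ otherwise (so $g(D)\subseteq C$). Hybrid solutions. A hybrid time domain is a subset $K\subseteq\mathbb{R}_{\ge0}\times\mathbb{N}_0$ that is a union of a finite or infinite sequence of sets $[t_\ell,t_{\ell+1}]\times\{\ell\}$ ($0=t_0\le t_1\le\dots$), the last one (if any) possibly of the form $[t_\ell,t_{\ell+1})\times\{\ell\}$ or $[t_\ell,\infty)\times\{\ell\}$. A solution of $\mathcal H$ is a map $z:K\to\mathbb{R}^n\times P^{|N|}$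 on a hybrid time domain with $z(0,0)\in C\cup D$, such that for each $\ell$, $t\mapsto z(t,\ell)$ is locally absolutely continuous on $T_\ell=\{t:(t,\ell)\in K\}$, and if $T_\ell$ has nonempty interior then $z(t,\ell)\in C$ for all $t$ in the interior and $\dot z(t,\ell)=f(z(t,\ell))$ for almost all $t\in T_\ell$; and whenever $(t,\ell),(t,\ell+1)\in K$, $z(t,\ell)\in D$ and $z(t,\ell+1)=g(z(t,\ell))$. A solution is complete if $K$ is unbounded. *)

theory Defs
  imports "HOL-Analysis.Analysis"
begin

definition abs_cont_on :: "real set \<Rightarrow> (real \<Rightarrow> real) \<Rightarrow> bool" where
  "abs_cont_on S f \<longleftrightarrow>
     (\<forall>\<epsilon>>0. \<exists>\<delta>>0. \<forall>(n::nat) (a::nat \<Rightarrow> real) (b::nat \<Rightarrow> real).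
        (\<forall>k<n. a k \<le> b k \<and> {a k..b k} \<subseteq> S) \<and>
        (\<forall>k<n. \<forall>l<n. k \<noteq> l \<longrightarrow> b k \<le> a l \<or> b l \<le> a k) \<and>
        (\<Sum>k<n. b k - a k) < \<delta>
        \<longrightarrow> (\<Sum>k<n. \<bar>f (b k) - f (a k)\<bar>) < \<epsilon>)"

definition loc_abs_cont_on :: "real set \<Rightarrow> (real \<Rightarrow> real) \<Rightarrow> bool" where
  "loc_abs_cont_on T f \<longleftrightarrow> (\<forall>a b. {a..b} \<subseteq> T \<longrightarrow> abs_cont_on {a..b} f)"

definition network_graph :: "nat \<Rightarrow> (nat \<times> nat) set \<Rightarrow> bool" where
  "network_graph nN E \<longleftrightarrow>
     E \<subseteq> {1..nN} \<times> {1..nN} \<and>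
     (\<forall>i j. (i, j) \<in> E \<longrightarrow> (j, i) \<notin> E) \<and>
     (\<forall>i\<in>{1..nN}. \<forall>j\<in>{1..nN}. (i, j) \<in> (E \<union> E\<inverse>)\<^sup>*)"

text \<open>Vectors of R^m are represented as functions nat => real; only the components
  i < m are meaningful. trunc m v zeroes the remaining ones; vnorm m is the Euclidean norm.\<close>
definition trunc :: "nat \<Rightarrow> (nat \<Rightarrow> real) \<Rightarrow> (nat \<Rightarrow> real)" where
  "trunc m v = (\<lambda>i. if i < m then v i else 0)"

definition vnorm :: "nat \<Rightarrow> (nat \<Rightarrow> real) \<Rightarrow> real" where
  "vnorm m v = sqrt (\<Sum>i<m. (v i)\<^sup>2)"

definition lipschitz_vec :: "nat \<Rightarrow> ((nat \<Rightarrow> real) \<Rightarrow> real \<Rightarrow> (nat \<Rightarrow> real)) \<Rightarrow> bool" where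
  "lipschitz_vec m f \<longleftrightarrow> (\<exists>L. \<forall>a b w v.
      vnorm m (\<lambda>i. f (trunc m a) w i - f (trunc m b) v i) \<le> L * (vnorm m (\<lambda>i. a i - b i) + \<bar>w - v\<bar>))"

definition lipschitz_scal :: "nat \<Rightarrow> ((nat \<Rightarrow> real) \<Rightarrow> real \<Rightarrow> real) \<Rightarrow> bool" where
  "lipschitz_scal m g \<longleftrightarrow> (\<exists>L. \<forall>a b w v.
      \<bar>g (trunc m a) w - g (trunc m b) v\<bar> \<le> L * (vnorm m (\<lambda>i. a i - b i) + \<bar>w - v\<bar>))"

text \<open>z = (eta, omega, xs, sigma): eta indexed by edges, omega by nodes,
  xs j = x^s_j in R^(nd j) (components i < nd j), sigma j in {-1,0,1}.\<close>
type_synonym hstate = "((nat \<times> nat) \<Rightarrow> real) \<times> (nat \<Rightarrow> real) \<times> (nat \<Rightarrow> nat \<Rightarrow> real) \<times> (nat \<Rightarrow> int)"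

definition st_eta :: "hstate \<Rightarrow> (nat \<times> nat) \<Rightarrow> real" where "st_eta z = fst z"
definition st_omega :: "hstate \<Rightarrow> nat \<Rightarrow> real" where "st_omega z = fst (snd z)"
definition st_xs :: "hstate \<Rightarrow> nat \<Rightarrow> nat \<Rightarrow> real" where "st_xs z = fst (snd (snd z))"
definition st_sigma :: "hstate \<Rightarrow> nat \<Rightarrow> int" where "st_sigma z = snd (snd (snd z))"

definition hsgn :: "real \<Rightarrow> int" where
  "hsgn a = (if a \<ge> 0 then 1 else -1)"

definition Iset :: "real \<Rightarrow> real \<Rightarrow> real \<Rightarrow> int set" where
  "Iset w0 w1 w = (if \<bar>w\<bar> > w1 then {hsgn w}
                   else if \<bar>w\<bar> < w0 then {0}
                   else {0, hsgn w})"

text \<open>Lambda = C.\<close>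
definition inLambda :: "nat \<Rightarrow> (nat \<Rightarrow> real) \<Rightarrow> (nat \<Rightarrow> real) \<Rightarrow> hstate \<Rightarrow> bool" where
  "inLambda nN w0 w1 z \<longleftrightarrow>
     (\<forall>j\<in>{1..nN}. st_sigma z j \<in> Iset (w0 j) (w1 j) (st_omega z j))"

definition inD :: "nat \<Rightarrow> (nat \<Rightarrow> real) \<Rightarrow> (nat \<Rightarrow> real) \<Rightarrow> hstate \<Rightarrow> bool" where
  "inD nN w0 w1 z \<longleftrightarrow> inLambda nN w0 w1 z \<and>
     (\<exists>j\<in>{1..nN}. (\<bar>st_omega z j\<bar> = w1 j \<and> st_sigma z j = 0) \<or>
                   (\<bar>st_omega z j\<bar> = w0 j \<and> st_sigma z j = hsgn (st_omega z j)))"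

definition sigma_jump :: "(nat \<Rightarrow> real) \<Rightarrow> (nat \<Rightarrow> real) \<Rightarrow> hstate \<Rightarrow> nat \<Rightarrow> int" where
  "sigma_jump w0 w1 z j =
     (if \<bar>st_omega z j\<bar> = w1 j \<and> st_sigma z j = 0 then hsgn (st_omega z j)
      else if \<bar>st_omega z j\<bar> = w0 j \<and> st_sigma z j = hsgn (st_omega z j) then 0
      else st_sigma z j)"

definition is_jump :: "nat \<Rightarrow> (nat \<times> nat) set \<Rightarrow> (nat \<Rightarrow> nat) \<Rightarrow> (nat \<Rightarrow> real) \<Rightarrow> (nat \<Rightarrow> real)
     \<Rightarrow> hstate \<Rightarrow> hstate \<Rightarrow> bool" where
  "is_jump nN E nd w0 w1 z z' \<longleftrightarrow>
     (\<forall>e\<in>E. st_eta z' e = st_eta z e) \<and>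
     (\<forall>j\<in>{1..nN}. st_omega z' j = st_omega z j \<and>
                   (\<forall>i<nd j. st_xs z' j i = st_xs z j i) \<and>
                   st_sigma z' j = sigma_jump w0 w1 z j)"

definition omega_rhs :: "(nat \<times> nat) set \<Rightarrow> (nat \<Rightarrow> real) \<Rightarrow> (nat \<Rightarrow> real) \<Rightarrow> (nat \<times> nat \<Rightarrow> real)
     \<Rightarrow> (nat \<Rightarrow> real) \<Rightarrow> (nat \<Rightarrow> nat) \<Rightarrow> (nat \<Rightarrow> (nat \<Rightarrow> real) \<Rightarrow> real \<Rightarrow> real)
     \<Rightarrow> hstate \<Rightarrow> nat \<Rightarrow> real" where
  "omega_rhs E M pL B dbar nd g z j =
     (- pL j + g j (trunc (nd j) (st_xs z j)) (- st_omega z j) - dbar j * of_int (st_sigma z j)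
      - (\<Sum>k\<in>{k. (j, k) \<in> E}. B (j, k) * sin (st_eta z (j, k)))
      + (\<Sum>i\<in>{i. (i, j) \<in> E}. B (i, j) * sin (st_eta z (i, j)))) / M j"

definition hybrid_time_domain :: "(real \<times> nat) set \<Rightarrow> bool" where
  "hybrid_time_domain K \<longleftrightarrow>
     (\<exists>tt :: nat \<Rightarrow> real. tt 0 = 0 \<and> mono tt \<and>
       (K = (\<Union>l. {tt l..tt (Suc l)} \<times> {l}) \<or>
        (\<exists>J I. K = (\<Union>l<J. {tt l..tt (Suc l)} \<times> {l}) \<union> I \<times> {J} \<and>
               (I = {tt J..tt (Suc J)} \<or> I = {tt J..<tt (Suc J)} \<or> I = {tt J..}))))"

definition tdom :: "(real \<times> nat) set \<Rightarrow> nat \<Rightarrow> real set" where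
  "tdom K l = {t. (t, l) \<in> K}"

definition complete_domain :: "(real \<times> nat) set \<Rightarrow> bool" where
  "complete_domain K \<longleftrightarrow> \<not> bounded ((\<lambda>(t, l). (t, real l)) ` K)"

definition is_hybrid_solution ::
  "nat \<Rightarrow> (nat \<times> nat) set \<Rightarrow> (nat \<Rightarrow> real) \<Rightarrow> (nat \<Rightarrow> real) \<Rightarrow> (nat \<times> nat \<Rightarrow> real)
   \<Rightarrow> (nat \<Rightarrow> nat) \<Rightarrow> (nat \<Rightarrow> (nat \<Rightarrow> real) \<Rightarrow> real \<Rightarrow> (nat \<Rightarrow> real))
   \<Rightarrow> (nat \<Rightarrow> (nat \<Rightarrow> real) \<Rightarrow> real \<Rightarrow> real) \<Rightarrow> (nat \<Rightarrow> real) \<Rightarrow> (nat \<Rightarrow> real) \<Rightarrow> (nat \<Rightarrow> real)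
   \<Rightarrow> (real \<times> nat) set \<Rightarrow> (real \<Rightarrow> nat \<Rightarrow> hstate) \<Rightarrow> bool" where
  "is_hybrid_solution nN E M pL B nd f g dbar w0 w1 K z \<longleftrightarrow>
     hybrid_time_domain K \<and> (0, 0) \<in> K \<and>
     (inLambda nN w0 w1 (z 0 0) \<or> inD nN w0 w1 (z 0 0)) \<and>
     (\<forall>l.
       \<comment> \<open>local absolute continuity on T_l\<close>
       (\<forall>e\<in>E. loc_abs_cont_on (tdom K l) (\<lambda>t. st_eta (z t l) e)) \<and>
       (\<forall>j\<in>{1..nN}. loc_abs_cont_on (tdom K l) (\<lambda>t. st_omega (z t l) j) \<and>
          (\<forall>i<nd j. loc_abs_cont_on (tdom K l) (\<lambda>t. st_xs (z t l) j i)) \<and>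
          (\<forall>t\<in>tdom K l. \<forall>s\<in>tdom K l. st_sigma (z t l) j = st_sigma (z s l) j)) \<and>
       \<comment> \<open>flow in C on the interior\<close>
       (\<forall>t\<in>interior (tdom K l). inLambda nN w0 w1 (z t l)) \<and>
       \<comment> \<open>differential equation almost everywhere on T_l\<close>
       (AE t in lebesgue. t \<in> tdom K l \<longrightarrow>
          (\<forall>(i, j)\<in>E. ((\<lambda>s. st_eta (z s l) (i, j)) has_real_derivative
                 (st_omega (z t l) i - st_omega (z t l) j)) (at t within tdom K l)) \<and>
          (\<forall>j\<in>{1..nN}.
             ((\<lambda>s. st_omega (z s l) j) has_real_derivative
                 omega_rhs E M pL B dbar nd g (z t l) j) (at t within tdom K l) \<and>
             (\<forall>i<nd j. ((\<lambda>s. st_xs (z s l) j i) has_real_derivative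
                 f j (trunc (nd j) (st_xs (z t l) j)) (- st_omega (z t l) j) i) (at t within tdom K l)))) \<and>
       \<comment> \<open>jumps\<close>
       (\<forall>t. (t, l) \<in> K \<and> (t, Suc l) \<in> K \<longrightarrow>
          inD nN w0 w1 (z t l) \<and> is_jump nN E nd w0 w1 (z t l) (z t (Suc l))))"

end

theory Submission
  imports Defs "HOL-Probability.Discrete_Topology"
begin


instance bcontfun :: (metric_space, banach) banach ..

definition clampT :: "real \<Rightarrow> real \<Rightarrow> real" where "clampT T t = max 0 (min T t)"

lemma clampT_cont: "continuous_on S (clampT T)"
  unfolding clampT_def by (intro continuous_intros)

lemma clampT_range: "0 \<le> T \<Longrightarrow> clampT T t \<in> {0..T}"
  unfolding clampT_def by auto

lemma clampT_id: "t \<in> {0..T} \<Longrightarrow> clampT T t = t"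
  unfolding clampT_def by auto

lemma clampT_le: "0 \<le> T \<Longrightarrow> clampT T t \<le> T"
  unfolding clampT_def by auto

lemma clampT_ge: "0 \<le> clampT T t"
  unfolding clampT_def by auto

lemma has_integral_cpow:
  assumes "0 \<le> c"
  shows "((\<lambda>s::real. C * s ^ k) has_integral (C * c ^ Suc k / Suc k)) {0..c}"
proof -
  have "((\<lambda>s::real. C * s ^ k) has_integral ((\<lambda>s. C * s ^ Suc k / Suc k) c - (\<lambda>s. C * s ^ Suc k / Suc k) 0)) {0..c}"
  proof (rule fundamental_theorem_of_calculus[OF assms])
    fix x :: real assume "x \<in> {0..c}"
    have "((\<lambda>s. C * s ^ Suc k / Suc k) has_real_derivative C * x ^ k) (at x within {0..c})"
    proof -
      have "((\<lambda>s. s ^ Suc k) has_real_derivative (Suc k) * x ^ k) (at x within {0..c})"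
        using DERIV_pow[of "Suc k" x] by (simp add: has_field_derivative_at_within)
      then have "((\<lambda>s. (C / Suc k) * s ^ Suc k) has_real_derivative (C / Suc k) * ((Suc k) * x ^ k)) (at x within {0..c})"
        by (rule DERIV_cmult)
      then show ?thesis by (simp add: field_simps del: of_nat_Suc)
    qed
    then show "((\<lambda>s. C * s ^ Suc k / Suc k) has_vector_derivative C * x ^ k) (at x within {0..c})"
      by (simp add: has_real_derivative_iff_has_vector_derivative)
  qed
  then show ?thesis by simp
qed

context
  fixes F :: "'a::banach \<Rightarrow> 'a" and L :: real and x0 :: 'a
  assumes lip: "\<And>x y. norm (F x - F y) \<le> L * norm (x - y)" and Lpos: "L > 0"
begin

lemma F_cont: "continuous_on S F"
proof -
  have "L-lipschitz_on S F"
    using lip Lpos by (intro lipschitz_onI) (auto simp: dist_norm less_imp_le)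
  then show ?thesis by (rule lipschitz_on_continuous_on)
qed

definition picard :: "real \<Rightarrow> (real \<Rightarrow> 'a) \<Rightarrow> real \<Rightarrow> 'a" where
  "picard T u = (\<lambda>t. x0 + integral {0..clampT T t} (\<lambda>s. F (u s)))"

lemma Fu_cont: "continuous_on S (\<lambda>s. F (apply_bcontfun u s))"
  by (rule continuous_on_compose2[OF F_cont continuous_on_apply_bcontfun]) auto

lemma Fu_int: "(\<lambda>s. F (apply_bcontfun (u::real \<Rightarrow>\<^sub>C 'a) s)) integrable_on {a..b}"
  by (intro integrable_continuous_real Fu_cont)

lemma picard_bcont:
  assumes "0 \<le> T"
  shows "picard T (apply_bcontfun u) \<in> bcontfun"
proof -
  define h where "h = (\<lambda>y. x0 + integral {0..y} (\<lambda>s. F (apply_bcontfun u s)))"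
  have hc: "continuous_on {0..T} h"
    unfolding h_def by (intro continuous_intros indefinite_integral_continuous_1 Fu_int)
  have eq: "picard T (apply_bcontfun u) = h \<circ> clampT T"
    by (auto simp: picard_def h_def)
  have "continuous_on UNIV (h \<circ> clampT T)"
    by (rule continuous_on_compose[OF clampT_cont continuous_on_subset[OF hc]])
      (use clampT_range[OF assms] in auto)
  moreover have "range (h \<circ> clampT T) \<subseteq> h ` {0..T}"
    using clampT_range[OF assms] by auto
  moreover have "bounded (h ` {0..T})"
    by (intro compact_imp_bounded compact_continuous_image hc) auto
  ultimately show ?thesis
    unfolding eq bcontfun_def by (auto intro: bounded_subset)
qed

definition Phi :: "real \<Rightarrow> (real \<Rightarrow>\<^sub>C 'a) \<Rightarrow> (real \<Rightarrow>\<^sub>C 'a)" where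
  "Phi T u = Bcontfun (picard T (apply_bcontfun u))"

lemma Phi_apply: "0 \<le> T \<Longrightarrow> apply_bcontfun (Phi T u) t = picard T (apply_bcontfun u) t"
  unfolding Phi_def using picard_bcont by (simp add: Bcontfun_inverse)

lemma picard_diff:
  assumes "0 \<le> T"
  shows "norm (picard T (apply_bcontfun u) t - picard T (apply_bcontfun v) t)
     \<le> integral {0..clampT T t} (\<lambda>s. L * norm (apply_bcontfun u s - apply_bcontfun v s))"
proof -
  have "picard T (apply_bcontfun u) t - picard T (apply_bcontfun v) t =
    integral {0..clampT T t} (\<lambda>s. F (apply_bcontfun u s) - F (apply_bcontfun v s))"
    unfolding picard_def by (simp add: integral_diff[OF Fu_int Fu_int])
  also have "norm \<dots> \<le> integral {0..clampT T t} (\<lambda>s. L * norm (apply_bcontfun u s - apply_bcontfun v s))"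
    by (intro integral_norm_bound_integral integrable_diff Fu_int lip
          integrable_continuous_real continuous_intros continuous_on_apply_bcontfun)
  finally show ?thesis .
qed

lemma Phi_iter:
  assumes "0 \<le> T"
  shows "norm (apply_bcontfun ((Phi T ^^ k) u) t - apply_bcontfun ((Phi T ^^ k) v) t)
     \<le> (L * clampT T t) ^ k / fact k * dist u v"
proof (induction k arbitrary: t)
  case 0
  then show ?case using dist_bounded[of u t v] by (simp add: dist_norm)
next
  case (Suc k)
  define a where "a = (Phi T ^^ k) u"
  define b where "b = (Phi T ^^ k) v"
  define c where "c = clampT T t"
  have c: "0 \<le> c" "c \<le> T" using clampT_le[OF assms] clampT_ge by (auto simp: c_def)
  have "norm (apply_bcontfun ((Phi T ^^ Suc k) u) t - apply_bcontfun ((Phi T ^^ Suc k) v) t)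
      = norm (picard T (apply_bcontfun a) t - picard T (apply_bcontfun b) t)"
    by (simp add: a_def b_def Phi_apply[OF assms])
  also have "\<dots> \<le> integral {0..c} (\<lambda>s. L * norm (apply_bcontfun a s - apply_bcontfun b s))"
    unfolding c_def by (rule picard_diff[OF assms])
  also have "\<dots> \<le> integral {0..c} (\<lambda>s. (L ^ Suc k * dist u v / fact k) * s ^ k)"
  proof (rule integral_le)
    show "(\<lambda>s. L * norm (apply_bcontfun a s - apply_bcontfun b s)) integrable_on {0..c}"
      by (intro integrable_continuous_real continuous_intros continuous_on_apply_bcontfun)
    show "(\<lambda>s. (L ^ Suc k * dist u v / fact k) * s ^ k) integrable_on {0..c}"
      by (intro integrable_continuous_real continuous_intros continuous_on_apply_bcontfun)
    fix s assume s: "s \<in> {0..c}"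
    then have "clampT T s = s" using c by (intro clampT_id) auto
    then have "norm (apply_bcontfun a s - apply_bcontfun b s) \<le> (L * s) ^ k / fact k * dist u v"
      using Suc.IH[of s] by (simp add: a_def b_def)
    then have "L * norm (apply_bcontfun a s - apply_bcontfun b s) \<le> L * ((L * s) ^ k / fact k * dist u v)"
      using Lpos by (intro mult_left_mono) auto
    then show "L * norm (apply_bcontfun a s - apply_bcontfun b s) \<le> (L ^ Suc k * dist u v / fact k) * s ^ k"
      by (simp add: power_mult_distrib field_simps)
  qed
  also have "\<dots> = (L ^ Suc k * dist u v / fact k) * c ^ Suc k / Suc k"
    by (rule integral_unique[OF has_integral_cpow[OF c(1)]])
  also have "\<dots> = (L * c) ^ Suc k / fact (Suc k) * dist u v"
    by (simp add: power_mult_distrib field_simps)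
  finally show ?case by (simp add: c_def)
qed


lemma exists_small_k: "\<exists>k. (L * T) ^ k / fact k < (1::real)"
proof -
  have "(\<lambda>n. (L * T) ^ n /\<^sub>R fact n) \<longlonglongrightarrow> 0"
    by (rule summable_LIMSEQ_zero[OF summable_exp_generic])
  then have "eventually (\<lambda>n. (L * T) ^ n /\<^sub>R fact n < 1) sequentially"
    by (rule order_tendstoD) simp
  then obtain n where "(L * T) ^ n /\<^sub>R fact n < 1"
    by (auto simp: eventually_sequentially)
  then have "(L * T) ^ n / fact n < 1" by (simp add: divide_inverse_commute)
  then show ?thesis by blast
qed

lemma Phi_fix: assumes "0 \<le> T" shows "\<exists>!u. Phi T u = u"
proof -
  obtain k where k: "(L * T) ^ k / fact k < (1::real)" using exists_small_k by blast
  define c where "c = (L * T) ^ k / fact k"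
  have c1: "c < 1" using k by (simp add: c_def)
  have c0: "0 \<le> c" unfolding c_def using Lpos assms by simp
  have contr: "dist ((Phi T ^^ k) u) ((Phi T ^^ k) v) \<le> c * dist u v" for u v
  proof (rule dist_bound)
    fix t
    have "dist (apply_bcontfun ((Phi T ^^ k) u) t) (apply_bcontfun ((Phi T ^^ k) v) t)
        = norm (apply_bcontfun ((Phi T ^^ k) u) t - apply_bcontfun ((Phi T ^^ k) v) t)"
      by (rule dist_norm)
    also have "\<dots> \<le> (L * clampT T t) ^ k / fact k * dist u v"
      by (rule Phi_iter[OF assms])
    also have "\<dots> \<le> c * dist u v"
    proof -
      have "(L * clampT T t) ^ k \<le> (L * T) ^ k"
        using Lpos clampT_le[OF assms] clampT_ge[of T t]
        by (intro power_mono mult_left_mono) auto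
      then have "(L * clampT T t) ^ k / fact k \<le> c"
        unfolding c_def by (intro divide_right_mono) auto
      then show ?thesis by (intro mult_right_mono) auto
    qed
    finally show "dist (apply_bcontfun ((Phi T ^^ k) u) t) (apply_bcontfun ((Phi T ^^ k) v) t) \<le> c * dist u v" .
  qed
  have ex: "\<exists>!x. (Phi T ^^ k) x = x"
    by (rule banach_fix_type[OF c0 c1]) (use contr in blast)
  then obtain w where w: "(Phi T ^^ k) w = w" and wu: "\<And>y. (Phi T ^^ k) y = y \<Longrightarrow> y = w"
    by (elim ex1E) blast
  have "(Phi T ^^ k) (Phi T w) = Phi T ((Phi T ^^ k) w)"
    by (rule funpow_swap1[symmetric])
  also have "\<dots> = Phi T w" by (simp only: w)
  finally have "Phi T w = w" by (rule wu)
  moreover have "u = w" if "Phi T u = u" for u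
  proof -
    have "(Phi T ^^ n) u = u" for n by (induction n) (simp_all add: that)
    then show ?thesis by (intro wu)
  qed
  ultimately show ?thesis by blast
qed

definition sol :: "real \<Rightarrow> real \<Rightarrow>\<^sub>C 'a" where
  "sol T = (THE u. Phi T u = u)"

lemma sol_fix: "0 \<le> T \<Longrightarrow> Phi T (sol T) = sol T"
  unfolding sol_def by (rule theI'[OF Phi_fix])

lemma sol_unique: "0 \<le> T \<Longrightarrow> Phi T u = u \<Longrightarrow> u = sol T"
  using Phi_fix sol_fix by blast

lemma sol_eq: "0 \<le> T \<Longrightarrow> apply_bcontfun (sol T) t = x0 + integral {0..clampT T t} (\<lambda>s. F (apply_bcontfun (sol T) s))"
  using Phi_apply[of T "sol T" t] sol_fix[of T] by (simp add: picard_def)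

lemma sol_consistent:
  assumes "0 \<le> T" "T \<le> T'" "t \<in> {0..T}"
  shows "apply_bcontfun (sol T) t = apply_bcontfun (sol T') t"
proof -
  have T': "0 \<le> T'" using assms by simp
  define w0 where "w0 = (\<lambda>t. apply_bcontfun (sol T') (clampT T t))"
  have wb: "w0 \<in> bcontfun"
  proof -
    have "continuous_on UNIV w0"
      unfolding w0_def by (rule continuous_on_compose2[OF continuous_on_apply_bcontfun clampT_cont]) auto
    moreover have "range w0 \<subseteq> range (apply_bcontfun (sol T'))" unfolding w0_def by auto
    ultimately show ?thesis unfolding bcontfun_def by (auto intro: bounded_subset)
  qed
  define w where "w = Bcontfun w0"
  have wa: "apply_bcontfun w = w0" unfolding w_def using wb by (simp add: Bcontfun_inverse)
  have "Phi T w = w"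
  proof (rule bcontfun_eqI)
    fix t
    have c: "clampT T t \<in> {0..T}" using clampT_range[OF assms(1)] .
    have "apply_bcontfun (Phi T w) t = x0 + integral {0..clampT T t} (\<lambda>s. F (w0 s))"
      by (simp add: Phi_apply[OF assms(1)] picard_def wa)
    also have "\<dots> = x0 + integral {0..clampT T t} (\<lambda>s. F (apply_bcontfun (sol T') s))"
      using c by (intro arg_cong[where f="\<lambda>x. x0 + x"] integral_cong) (auto simp: w0_def clampT_id)
    also have "\<dots> = apply_bcontfun (sol T') (clampT T t)"
    proof -
      have cc: "clampT T' (clampT T t) = clampT T t" using c assms(2) by (intro clampT_id) auto
      have "apply_bcontfun (sol T') (clampT T t) = x0 + integral {0..clampT T' (clampT T t)} (\<lambda>s. F (apply_bcontfun (sol T') s))"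
        by (rule sol_eq[OF T'])
      then show ?thesis unfolding cc by (rule sym)
    qed
    also have "\<dots> = apply_bcontfun w t" by (simp add: wa w0_def)
    finally show "apply_bcontfun (Phi T w) t = apply_bcontfun w t" .
  qed
  then have "w = sol T" by (rule sol_unique[OF assms(1)])
  then have "apply_bcontfun (sol T) t = w0 t" using wa by simp
  also have "\<dots> = apply_bcontfun (sol T') t" unfolding w0_def clampT_id[OF assms(3)] ..
  finally show ?thesis .
qed

definition gsol :: "real \<Rightarrow> 'a" where
  "gsol t = apply_bcontfun (sol (max t 0 + 1)) t"

lemma gsol_eq_sol: assumes "0 \<le> T" "t \<in> {0..T}" shows "gsol t = apply_bcontfun (sol T) t"
proof (cases "max t 0 + 1 \<le> T")
  case True
  then show ?thesis unfolding gsol_def using assms by (intro sol_consistent) auto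
next
  case False
  then show ?thesis unfolding gsol_def using assms by (intro sol_consistent[symmetric]) auto
qed

lemma gsol_0: "gsol 0 = x0"
  using sol_eq[of 1 0] gsol_eq_sol[of 1 0] by (simp add: clampT_def)

lemma gsol_deriv:
  assumes "0 \<le> t"
  shows "(gsol has_vector_derivative F (gsol t)) (at t within {0..})"
proof -
  define T where "T = t + 1"
  have T: "0 \<le> T" "t \<in> {0..T}" using assms unfolding T_def by auto
  define g where "g = (\<lambda>s. F (apply_bcontfun (sol T) s))"
  have gc: "continuous_on {0..T} g" unfolding g_def by (rule Fu_cont)
  have d0: "((\<lambda>u. x0 + integral {0..u} g) has_vector_derivative g t) (at t within {0..T})"
    using has_vector_derivative_add[OF has_vector_derivative_const[of x0] integral_has_vector_derivative[OF gc T(2)]]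
    by simp
  have eqs: "gsol s = x0 + integral {0..s} g" if s: "s \<in> {0..T}" for s
  proof -
    have "gsol s = apply_bcontfun (sol T) s" by (rule gsol_eq_sol[OF T(1) s])
    also have "\<dots> = x0 + integral {0..clampT T s} g" unfolding g_def by (rule sol_eq[OF T(1)])
    also have "clampT T s = s" by (rule clampT_id[OF s])
    finally show ?thesis .
  qed
  have d: "(gsol has_vector_derivative g t) (at t within {0..T})"
    by (rule has_vector_derivative_transform[OF T(2) eqs d0])
  have "at t within {0..} = at t within {0..T}"
    by (rule at_within_nhd[of _ "{..<T}"]) (auto simp: T_def)
  moreover have "g t = F (gsol t)" using gsol_eq_sol[OF T] by (simp add: g_def)
  ultimately show ?thesis using d by simp
qed

end

lemma ode_global:
  fixes F :: "'a::banach \<Rightarrow> 'a"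
  assumes lip: "\<And>x y. norm (F x - F y) \<le> L * norm (x - y)"
  shows "\<exists>X. X c = x0 \<and> (\<forall>t\<ge>c. (X has_vector_derivative F (X t)) (at t within {c..}))"
proof -
  define L' where "L' = max L 1"
  have lip': "norm (F x - F y) \<le> L' * norm (x - y)" for x y
    using lip[of x y] by (smt (verit) L'_def mult_right_mono norm_ge_zero)
  have L': "L' > 0" by (simp add: L'_def)
  define X where "X = (\<lambda>t. gsol F x0 (t - c))"
  have "X c = x0" using gsol_0[OF lip' L'] by (simp add: X_def)
  moreover have "(X has_vector_derivative F (X t)) (at t within {c..})" if t: "t \<ge> c" for t
  proof -
    have d1: "((\<lambda>s. s - c) has_vector_derivative 1) (at t within {c..})"
      by (auto intro!: derivative_eq_intros)
    have img: "(\<lambda>s. s - c) ` {c..} = {0..}"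
      by (auto simp: image_iff intro!: bexI[of _ "_ + c"])
    have "(gsol F x0 has_vector_derivative F (gsol F x0 (t - c))) (at (t - c) within (\<lambda>s. s - c) ` {c..})"
      unfolding img using gsol_deriv[OF lip' L', of "t - c" x0] t by simp
    from vector_diff_chain_within[OF d1 this]
    show ?thesis by (simp add: X_def o_def)
  qed
  ultimately show ?thesis by blast
qed




lemma abs_cont_of_lip:
  assumes "\<And>x y. x \<in> S \<Longrightarrow> y \<in> S \<Longrightarrow> \<bar>h x - h y\<bar> \<le> C * \<bar>x - y\<bar>"
  shows "abs_cont_on S h"
  unfolding abs_cont_on_def
proof (intro allI impI)
  fix e :: real assume e: "e > 0"
  define C' where "C' = \<bar>C\<bar> + 1"
  have C': "C' > 0" by (simp add: C'_def)
  show "\<exists>d>0. \<forall>(n::nat) a b. (\<forall>k<n. a k \<le> b k \<and> {a k..b k} \<subseteq> S) \<and>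
        (\<forall>k<n. \<forall>l<n. k \<noteq> l \<longrightarrow> b k \<le> a l \<or> b l \<le> a k) \<and> (\<Sum>k<n. b k - a k) < d
        \<longrightarrow> (\<Sum>k<n. \<bar>h (b k) - h (a k)\<bar>) < e"
  proof (intro exI[of _ "e / C'"] conjI allI impI)
    show "e / C' > 0" using e C' by simp
    fix n :: nat and a b :: "nat \<Rightarrow> real"
    assume H: "(\<forall>k<n. a k \<le> b k \<and> {a k..b k} \<subseteq> S) \<and>
        (\<forall>k<n. \<forall>l<n. k \<noteq> l \<longrightarrow> b k \<le> a l \<or> b l \<le> a k) \<and> (\<Sum>k<n. b k - a k) < e / C'"
    have "(\<Sum>k<n. \<bar>h (b k) - h (a k)\<bar>) \<le> (\<Sum>k<n. C' * (b k - a k))"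
    proof (rule sum_mono)
      fix k assume "k \<in> {..<n}"
      then have ak: "a k \<le> b k" "{a k..b k} \<subseteq> S" using H by auto
      then have ab: "a k \<le> b k" "a k \<in> S" "b k \<in> S" by auto
      have "\<bar>h (b k) - h (a k)\<bar> \<le> C * \<bar>b k - a k\<bar>" using assms ab by blast
      also have "\<dots> \<le> C' * (b k - a k)" using ab unfolding C'_def
        by (simp add: abs_of_nonneg) (smt (verit) mult_right_mono abs_ge_self)
      finally show "\<bar>h (b k) - h (a k)\<bar> \<le> C' * (b k - a k)" .
    qed
    also have "\<dots> = C' * (\<Sum>k<n. b k - a k)" by (simp add: sum_distrib_left)
    also have "\<dots> < C' * (e / C')" using H C' by (intro mult_strict_left_mono) auto
    also have "\<dots> = e" using C' by simp
    finally show "(\<Sum>k<n. \<bar>h (b k) - h (a k)\<bar>) < e" .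
  qed
qed

lemma loc_abs_cont_mono: "loc_abs_cont_on T h \<Longrightarrow> S \<subseteq> T \<Longrightarrow> loc_abs_cont_on S h"
  unfolding loc_abs_cont_on_def by blast

lemma ode_sol_cont:
  assumes "\<forall>t\<ge>c. (X has_vector_derivative F (X t)) (at t within {c..})"
  shows "continuous_on {c..} X"
  unfolding continuous_on_eq_continuous_within
  using assms has_vector_derivative_continuous by fastforce

lemma ode_sol_lip:
  fixes F :: "'a::banach \<Rightarrow> 'a"
  assumes "\<forall>t\<ge>c. (X has_vector_derivative F (X t)) (at t within {c..})"
    and Fc: "continuous_on UNIV F" and ab: "{a..b} \<subseteq> {c..}"
  shows "\<exists>C. \<forall>x\<in>{a..b}. \<forall>y\<in>{a..b}. norm (X x - X y) \<le> C * \<bar>x - y\<bar>"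
proof -
  have Xc: "continuous_on {a..b} X"
    using ode_sol_cont[OF assms(1)] ab by (rule continuous_on_subset)
  have "compact ((\<lambda>t. F (X t)) ` {a..b})"
    by (intro compact_continuous_image continuous_on_compose2[OF Fc Xc]) auto
  then obtain B where B: "\<And>t. t \<in> {a..b} \<Longrightarrow> norm (F (X t)) \<le> B"
    by (meson compact_imp_bounded bounded_iff imageI)
  define B' where "B' = max B 0"
  have "B'-lipschitz_on {a..b} X"
  proof (rule bounded_derivative_imp_lipschitz)
    fix x assume x: "x \<in> {a..b}"
    have "(X has_vector_derivative F (X x)) (at x within {c..})" using assms(1) ab x by auto
    then have "(X has_vector_derivative F (X x)) (at x within {a..b})"
      using ab by (rule has_vector_derivative_within_subset)
    then show "(X has_derivative (\<lambda>h. h *\<^sub>R F (X x))) (at x within {a..b})"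
      by (simp add: has_vector_derivative_def)
    have "onorm (\<lambda>h::real. h *\<^sub>R F (X x)) = onorm (\<lambda>h::real. h) * norm (F (X x))"
      by (rule onorm_scaleR_left) (rule bounded_linear_ident)
    also have "\<dots> = norm (F (X x))" by (simp add: onorm_id)
    also have "\<dots> \<le> B'" using B[OF x] by (simp add: B'_def)
    finally show "onorm (\<lambda>h::real. h *\<^sub>R F (X x)) \<le> B'" .
  qed (auto simp: B'_def)
  then show ?thesis by (auto simp: lipschitz_on_def dist_norm dist_real_def)
qed




lemma sin_lip: "\<bar>sin x - sin y\<bar> \<le> \<bar>x - y\<bar>" for x y :: real
proof -
  have "\<bar>sin x - sin y\<bar> = 2 * \<bar>sin ((x - y) / 2)\<bar> * \<bar>cos ((x + y) / 2)\<bar>"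
    by (simp add: sin_diff_sin abs_mult)
  also have "\<dots> \<le> 2 * \<bar>(x - y) / 2\<bar> * 1"
    by (intro mult_mono abs_sin_x_le_abs_x abs_cos_le_one) auto
  finally show ?thesis by simp
qed

lemma vnorm_diff_le:
  assumes "\<And>i. i < m \<Longrightarrow> \<bar>a i - b i\<bar> \<le> d"
  shows "vnorm m (\<lambda>i. a i - b i) \<le> sqrt m * d"
proof -
  have d: "0 \<le> d" if "m > 0" using assms[of 0] that by auto
  have "(\<Sum>i<m. (a i - b i)\<^sup>2) \<le> (\<Sum>i<m. d\<^sup>2)"
  proof (rule sum_mono)
    fix i assume "i \<in> {..<m}"
    then have "\<bar>a i - b i\<bar> \<le> d" using assms by auto
    then have "\<bar>a i - b i\<bar>\<^sup>2 \<le> d\<^sup>2" by (intro power_mono) auto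
    then show "(a i - b i)\<^sup>2 \<le> d\<^sup>2" by simp
  qed
  then have "vnorm m (\<lambda>i. a i - b i) \<le> sqrt (m * d\<^sup>2)"
    unfolding vnorm_def by simp
  also have "\<dots> = sqrt m * \<bar>d\<bar>" by (simp add: real_sqrt_mult real_sqrt_abs)
  also have "\<dots> = sqrt m * d" using d by (cases "m = 0") auto
  finally show ?thesis .
qed

lemma comp_le_vnorm: "i < m \<Longrightarrow> \<bar>u i\<bar> \<le> vnorm m u"
proof -
  assume i: "i < m"
  have "(u i)\<^sup>2 \<le> (\<Sum>k<m. (u k)\<^sup>2)"
    using i by (intro member_le_sum) auto
  then have "sqrt ((u i)\<^sup>2) \<le> sqrt (\<Sum>k<m. (u k)\<^sup>2)" by (rule real_sqrt_le_mono)
  then show ?thesis by (simp add: vnorm_def real_sqrt_abs)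
qed

lemma abs_le_absL: "\<bar>x\<bar> \<le> L * y \<Longrightarrow> 0 \<le> y \<Longrightarrow> \<bar>x\<bar> \<le> \<bar>L\<bar> * y" for x L y :: real
  by (smt (verit) abs_ge_self mult_right_mono)

lemma bcontfun_finsupp:
  fixes h :: "nat \<Rightarrow> real"
  assumes "finite I" "\<And>n. n \<notin> I \<Longrightarrow> h n = (0::real)"
  shows "(\<lambda>d. h (of_discrete d)) \<in> bcontfun"
proof -
  have "range (\<lambda>d. h (of_discrete d)) \<subseteq> insert 0 (h ` I)" using assms(2) by auto
  then have "bounded (range (\<lambda>d. h (of_discrete d)))"
    by (meson bounded_subset finite_imp_bounded finite_insert finite_imageI assms(1))
  moreover have "continuous_on UNIV (\<lambda>d. h (of_discrete d))"
    unfolding continuous_on_open_invariant by (auto intro: open_discrete)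
  ultimately show ?thesis by (simp add: bcontfun_def)
qed

definition ev :: "(nat discrete \<Rightarrow>\<^sub>C real) \<Rightarrow> nat \<Rightarrow> real" where
  "ev v n = apply_bcontfun v (discrete n)"

definition mk :: "(nat \<Rightarrow> real) \<Rightarrow> (nat discrete \<Rightarrow>\<^sub>C real)" where
  "mk h = Bcontfun (\<lambda>d. h (of_discrete d))"

lemma ev_mk:
  fixes h :: "nat \<Rightarrow> real"
  assumes "finite I" "\<And>n. n \<notin> I \<Longrightarrow> h n = 0"
  shows "ev (mk h) = h" "apply_bcontfun (mk h) d = h (of_discrete d)"
proof -
  have b: "(\<lambda>d. h (of_discrete d)) \<in> bcontfun" by (rule bcontfun_finsupp[of I h, OF assms])
  then have a: "apply_bcontfun (mk h) = (\<lambda>d. h (of_discrete d))" by (simp add: mk_def Bcontfun_inverse)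
  then show "apply_bcontfun (mk h) d = h (of_discrete d)" by simp
  show "ev (mk h) = h" by (simp add: ev_def fun_eq_iff discrete_inverse a)
qed

definition ie :: "nat \<times> nat \<Rightarrow> nat" where "ie e = 3 * prod_encode e"
definition io :: "nat \<Rightarrow> nat" where "io j = 3 * j + 1"
definition ix :: "nat \<Rightarrow> nat \<Rightarrow> nat" where "ix j i = 3 * prod_encode (j, i) + 2"

lemma ie_mod: "ie e mod 3 = 0" "ie e div 3 = prod_encode e" unfolding ie_def by presburger+
lemma io_mod: "io j mod 3 = 1" "io j div 3 = j" unfolding io_def by presburger+
lemma ix_mod: "ix j i mod 3 = 2" "ix j i div 3 = prod_encode (j, i)" unfolding ix_def by presburger+

lemma idx_cases:
  obtains (e) e where "n = ie e" | (o) j where "n = io j" | (x) j i where "n = ix j i"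
proof -
  have "n = 3 * (n div 3) + n mod 3" by simp
  moreover have "n mod 3 = 0 \<or> n mod 3 = 1 \<or> n mod 3 = 2" by auto
  ultimately show ?thesis
    using that prod_decode_inverse[of "n div 3"]
    by (metis ie_def io_def ix_def add_0_right surj_pair)
qed

definition zz :: "(nat \<Rightarrow> real) \<Rightarrow> (nat \<Rightarrow> int) \<Rightarrow> hstate" where
  "zz v \<sigma> = (\<lambda>e. v (ie e), \<lambda>j. v (io j), \<lambda>j i. v (ix j i), \<sigma>)"

lemma zz_simps: "st_eta (zz v \<sigma>) e = v (ie e)" "st_omega (zz v \<sigma>) j = v (io j)"
  "st_xs (zz v \<sigma>) j i = v (ix j i)" "st_sigma (zz v \<sigma>) = \<sigma>"
  by (auto simp: zz_def st_eta_def st_omega_def st_xs_def st_sigma_def)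




lemma zz_xs_fun: "st_xs (zz v \<sigma>) j = (\<lambda>i. v (ix j i))"
  by (auto simp: zz_def st_xs_def)

lemma sum_sin_lip:
  fixes a b c :: "'i \<Rightarrow> real"
  assumes "\<And>k. k \<in> S \<Longrightarrow> \<bar>a k - b k\<bar> \<le> d"
  shows "\<bar>(\<Sum>k\<in>S. c k * sin (a k)) - (\<Sum>k\<in>S. c k * sin (b k))\<bar> \<le> (\<Sum>k\<in>S. \<bar>c k\<bar>) * d"
proof -
  have "\<bar>(\<Sum>k\<in>S. c k * sin (a k)) - (\<Sum>k\<in>S. c k * sin (b k))\<bar> = \<bar>\<Sum>k\<in>S. c k * (sin (a k) - sin (b k))\<bar>"
    by (simp add: sum_subtractf[symmetric] right_diff_distrib)
  also have "\<dots> \<le> (\<Sum>k\<in>S. \<bar>c k * (sin (a k) - sin (b k))\<bar>)" by (rule Groups_Big.sum_abs)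
  also have "\<dots> \<le> (\<Sum>k\<in>S. \<bar>c k\<bar> * d)"
  proof (rule sum_mono)
    fix k assume k: "k \<in> S"
    have "\<bar>sin (a k) - sin (b k)\<bar> \<le> d" using sin_lip[of "a k" "b k"] assms[OF k] by linarith
    then show "\<bar>c k * (sin (a k) - sin (b k))\<bar> \<le> \<bar>c k\<bar> * d"
      by (simp add: abs_mult mult_left_mono)
  qed
  also have "\<dots> = (\<Sum>k\<in>S. \<bar>c k\<bar>) * d" by (simp add: sum_distrib_right)
  finally show ?thesis .
qed

lemma lin3: "(a * d + b * d + c * d) / M = (a + b + c) / M * d" for a b c d M :: real
  by (simp add: distrib_right)

lemma vnorm_nonneg: "0 \<le> vnorm m u"
  unfolding vnorm_def by (intro real_sqrt_ge_zero sum_nonneg) auto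

lemma abs3: "\<bar>a - b + c\<bar> \<le> \<bar>a\<bar> + \<bar>b\<bar> + \<bar>c\<bar>" for a b c :: real by arith

locale netw =
  fixes nN :: nat and E :: "(nat \<times> nat) set" and M pL dbar :: "nat \<Rightarrow> real"
    and B :: "nat \<times> nat \<Rightarrow> real" and nd :: "nat \<Rightarrow> nat"
    and f :: "nat \<Rightarrow> (nat \<Rightarrow> real) \<Rightarrow> real \<Rightarrow> (nat \<Rightarrow> real)"
    and g :: "nat \<Rightarrow> (nat \<Rightarrow> real) \<Rightarrow> real \<Rightarrow> real"
  assumes netE: "E \<subseteq> {1..nN} \<times> {1..nN}"
    and Mpos: "\<forall>j\<in>{1..nN}. M j > 0"
    and flip: "\<forall>j\<in>{1..nN}. lipschitz_vec (nd j) (f j)"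
    and glip: "\<forall>j\<in>{1..nN}. lipschitz_scal (nd j) (g j)"
begin

lemma finE: "finite E"
  using netE by (rule finite_subset) auto

definition rhs :: "(nat \<Rightarrow> int) \<Rightarrow> (nat \<Rightarrow> real) \<Rightarrow> nat \<Rightarrow> real" where
  "rhs \<sigma> v n = (if n mod 3 = 0 then
      (if prod_decode (n div 3) \<in> E then v (io (fst (prod_decode (n div 3)))) - v (io (snd (prod_decode (n div 3)))) else 0)
    else if n mod 3 = 1 then
      (if n div 3 \<in> {1..nN} then omega_rhs E M pL B dbar nd g (zz v \<sigma>) (n div 3) else 0)
    else (if fst (prod_decode (n div 3)) \<in> {1..nN} \<and> snd (prod_decode (n div 3)) < nd (fst (prod_decode (n div 3)))
          then f (fst (prod_decode (n div 3))) (trunc (nd (fst (prod_decode (n div 3)))) (\<lambda>i. v (ix (fst (prod_decode (n div 3))) i)))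
              (- v (io (fst (prod_decode (n div 3))))) (snd (prod_decode (n div 3)))
          else 0))"

lemma rhs_ie: "rhs \<sigma> v (ie (a, b)) = (if (a, b) \<in> E then v (io a) - v (io b) else 0)"
  by (simp add: rhs_def ie_mod)

lemma rhs_io: "rhs \<sigma> v (io j) = (if j \<in> {1..nN} then omega_rhs E M pL B dbar nd g (zz v \<sigma>) j else 0)"
  by (simp add: rhs_def io_mod)

lemma rhs_ix: "rhs \<sigma> v (ix j i) = (if j \<in> {1..nN} \<and> i < nd j then f j (trunc (nd j) (\<lambda>i. v (ix j i))) (- v (io j)) i else 0)"
  by (simp add: rhs_def ix_mod)

definition Idx :: "nat set" where
  "Idx = ie ` E \<union> io ` {1..nN} \<union> (\<lambda>(j, i). ix j i) ` (SIGMA j:{1..nN}. {..<nd j})"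

lemma finIdx: "finite Idx"
  unfolding Idx_def using finE by auto

lemma rhs_supp: assumes that: "n \<notin> Idx" shows "rhs \<sigma> v n = 0"
proof (cases n rule: idx_cases)
  case (e e)
  then show ?thesis using that by (cases e) (auto simp: rhs_ie Idx_def)
next
  case (o j)
  then show ?thesis using that by (auto simp: rhs_io Idx_def)
next
  case (x j i)
  then show ?thesis using that by (auto simp: rhs_ix Idx_def)
qed

definition Lg :: "nat \<Rightarrow> real" where
  "Lg j = (SOME L. \<forall>a b w v. \<bar>g j (trunc (nd j) a) w - g j (trunc (nd j) b) v\<bar> \<le> L * (vnorm (nd j) (\<lambda>i. a i - b i) + \<bar>w - v\<bar>))"

lemma Lg: "j \<in> {1..nN} \<Longrightarrow> \<bar>g j (trunc (nd j) a) w - g j (trunc (nd j) b) v\<bar> \<le> Lg j * (vnorm (nd j) (\<lambda>i. a i - b i) + \<bar>w - v\<bar>)"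
proof -
  assume j: "j \<in> {1..nN}"
  have "\<exists>L. \<forall>a b w v. \<bar>g j (trunc (nd j) a) w - g j (trunc (nd j) b) v\<bar> \<le> L * (vnorm (nd j) (\<lambda>i. a i - b i) + \<bar>w - v\<bar>)"
    using glip j unfolding lipschitz_scal_def by blast
  then have "\<forall>a b w v. \<bar>g j (trunc (nd j) a) w - g j (trunc (nd j) b) v\<bar> \<le> Lg j * (vnorm (nd j) (\<lambda>i. a i - b i) + \<bar>w - v\<bar>)"
    unfolding Lg_def by (rule someI_ex)
  then show ?thesis by blast
qed

definition Lf :: "nat \<Rightarrow> real" where
  "Lf j = (SOME L. \<forall>a b w v. vnorm (nd j) (\<lambda>i. f j (trunc (nd j) a) w i - f j (trunc (nd j) b) v i) \<le> L * (vnorm (nd j) (\<lambda>i. a i - b i) + \<bar>w - v\<bar>))"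

lemma Lf: "j \<in> {1..nN} \<Longrightarrow> vnorm (nd j) (\<lambda>i. f j (trunc (nd j) a) w i - f j (trunc (nd j) b) v i) \<le> Lf j * (vnorm (nd j) (\<lambda>i. a i - b i) + \<bar>w - v\<bar>)"
proof -
  assume j: "j \<in> {1..nN}"
  have "\<exists>L. \<forall>a b w v. vnorm (nd j) (\<lambda>i. f j (trunc (nd j) a) w i - f j (trunc (nd j) b) v i) \<le> L * (vnorm (nd j) (\<lambda>i. a i - b i) + \<bar>w - v\<bar>)"
    using flip j unfolding lipschitz_vec_def by blast
  then have "\<forall>a b w v. vnorm (nd j) (\<lambda>i. f j (trunc (nd j) a) w i - f j (trunc (nd j) b) v i) \<le> Lf j * (vnorm (nd j) (\<lambda>i. a i - b i) + \<bar>w - v\<bar>)"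
    unfolding Lf_def by (rule someI_ex)
  then show ?thesis by blast
qed

definition Kw :: "nat \<Rightarrow> real" where
  "Kw j = (\<bar>Lg j\<bar> * (sqrt (nd j) + 1) + (\<Sum>k\<in>{k. (j, k) \<in> E}. \<bar>B (j, k)\<bar>) + (\<Sum>i\<in>{i. (i, j) \<in> E}. \<bar>B (i, j)\<bar>)) / M j"

definition Kx :: "nat \<Rightarrow> real" where
  "Kx j = \<bar>Lf j\<bar> * (sqrt (nd j) + 1)"

definition K :: real where
  "K = 2 + (\<Sum>j\<in>{1..nN}. Kw j + Kx j)"

lemma Kw_nonneg: "j \<in> {1..nN} \<Longrightarrow> 0 \<le> Kw j"
  using Mpos unfolding Kw_def by (intro divide_nonneg_pos add_nonneg_nonneg sum_nonneg) auto

lemma Kx_nonneg: "0 \<le> Kx j"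
  unfolding Kx_def by simp

lemma K_ge: "j \<in> {1..nN} \<Longrightarrow> Kw j \<le> K \<and> Kx j \<le> K" "2 \<le> K"
proof -
  have nn: "\<And>j. j \<in> {1..nN} \<Longrightarrow> 0 \<le> Kw j + Kx j" using Kw_nonneg Kx_nonneg by (simp add: add_nonneg_nonneg)
  have s0: "0 \<le> (\<Sum>j\<in>{1..nN}. Kw j + Kx j)" using nn by (intro sum_nonneg) auto
  then show "2 \<le> K" by (simp add: K_def)
  assume j: "j \<in> {1..nN}"
  have "Kw j + Kx j \<le> (\<Sum>j\<in>{1..nN}. Kw j + Kx j)"
    using j nn by (intro member_le_sum) auto
  then show "Kw j \<le> K \<and> Kx j \<le> K" using Kw_nonneg[OF j] Kx_nonneg[of j] by (simp add: K_def)
qed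

lemma rhs_lip:
  assumes vw: "\<And>m. \<bar>v m - w m\<bar> \<le> d"
  shows "\<bar>rhs \<sigma> v n - rhs \<sigma> w n\<bar> \<le> K * d"
proof -
  have d: "0 \<le> d" using vw[of 0] by linarith
  show ?thesis
  proof (cases n rule: idx_cases)
    case (e e)
    obtain a b where ab: "e = (a, b)" by (cases e)
    have "\<bar>rhs \<sigma> v n - rhs \<sigma> w n\<bar> \<le> 2 * d"
      using vw[of "io a"] vw[of "io b"] d by (auto simp: e ab rhs_ie)
    also have "\<dots> \<le> K * d" using K_ge(2) d by (intro mult_right_mono) auto
    finally show ?thesis .
  next
    case (o j)
    show ?thesis
    proof (cases "j \<in> {1..nN}")
      case False
      then have "rhs \<sigma> v n = 0" "rhs \<sigma> w n = 0" by (simp_all only: o rhs_io if_not_P[OF False] if_False)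
      then show ?thesis using d K_ge(2) by simp
    next
      case j: True
      define Gv where "Gv = g j (trunc (nd j) (\<lambda>i. v (ix j i))) (- v (io j))"
      define Gw where "Gw = g j (trunc (nd j) (\<lambda>i. w (ix j i))) (- w (io j))"
      define S1v where "S1v = (\<Sum>k\<in>{k. (j, k) \<in> E}. B (j, k) * sin (v (ie (j, k))))"
      define S1w where "S1w = (\<Sum>k\<in>{k. (j, k) \<in> E}. B (j, k) * sin (w (ie (j, k))))"
      define S2v where "S2v = (\<Sum>i\<in>{i. (i, j) \<in> E}. B (i, j) * sin (v (ie (i, j))))"
      define S2w where "S2w = (\<Sum>i\<in>{i. (i, j) \<in> E}. B (i, j) * sin (w (ie (i, j))))"
      have Mj: "M j > 0" using Mpos j by auto
      have ov: "omega_rhs E M pL B dbar nd g (zz v \<sigma>) j = (- pL j + Gv - dbar j * of_int (\<sigma> j) - S1v + S2v) / M j"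
        unfolding omega_rhs_def zz_simps zz_xs_fun Gv_def S1v_def S2v_def by (rule refl)
      have ow: "omega_rhs E M pL B dbar nd g (zz w \<sigma>) j = (- pL j + Gw - dbar j * of_int (\<sigma> j) - S1w + S2w) / M j"
        unfolding omega_rhs_def zz_simps zz_xs_fun Gw_def S1w_def S2w_def by (rule refl)
      have eq0: "rhs \<sigma> v n - rhs \<sigma> w n = ((- pL j + Gv - dbar j * of_int (\<sigma> j) - S1v + S2v) - (- pL j + Gw - dbar j * of_int (\<sigma> j) - S1w + S2w)) / M j"
        using j by (simp only: o rhs_io ov ow diff_divide_distrib if_True)
      have eq1: "(- pL j + Gv - dbar j * of_int (\<sigma> j) - S1v + S2v) - (- pL j + Gw - dbar j * of_int (\<sigma> j) - S1w + S2w) = (Gv - Gw) - (S1v - S1w) + (S2v - S2w)"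
        by linarith
      have eq: "rhs \<sigma> v n - rhs \<sigma> w n = ((Gv - Gw) - (S1v - S1w) + (S2v - S2w)) / M j"
        using eq0 eq1 by simp
      have G: "\<bar>Gv - Gw\<bar> \<le> \<bar>Lg j\<bar> * (sqrt (nd j) + 1) * d"
      proof -
        have "\<bar>Gv - Gw\<bar> \<le> Lg j * (vnorm (nd j) (\<lambda>i. v (ix j i) - w (ix j i)) + \<bar>- v (io j) - - w (io j)\<bar>)"
          unfolding Gv_def Gw_def by (rule Lg[OF j])
        then have "\<bar>Gv - Gw\<bar> \<le> \<bar>Lg j\<bar> * (vnorm (nd j) (\<lambda>i. v (ix j i) - w (ix j i)) + \<bar>- v (io j) - - w (io j)\<bar>)"
          by (rule abs_le_absL) (intro add_nonneg_nonneg vnorm_nonneg abs_ge_zero)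
        also have "\<dots> \<le> \<bar>Lg j\<bar> * (sqrt (nd j) * d + d)"
        proof (intro mult_left_mono add_mono)
          show "vnorm (nd j) (\<lambda>i. v (ix j i) - w (ix j i)) \<le> sqrt (nd j) * d"
            by (rule vnorm_diff_le) (rule vw)
          show "\<bar>- v (io j) - - w (io j)\<bar> \<le> d" using vw[of "io j"] by linarith
        qed auto
        finally show ?thesis by (simp add: algebra_simps)
      qed
      have S1: "\<bar>S1v - S1w\<bar> \<le> (\<Sum>k\<in>{k. (j, k) \<in> E}. \<bar>B (j, k)\<bar>) * d"
        unfolding S1v_def S1w_def by (rule sum_sin_lip) (rule vw)
      have S2: "\<bar>S2v - S2w\<bar> \<le> (\<Sum>i\<in>{i. (i, j) \<in> E}. \<bar>B (i, j)\<bar>) * d"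
        unfolding S2v_def S2w_def by (rule sum_sin_lip) (rule vw)
      have "\<bar>rhs \<sigma> v n - rhs \<sigma> w n\<bar> = \<bar>(Gv - Gw) - (S1v - S1w) + (S2v - S2w)\<bar> / M j"
        using Mj by (simp add: eq abs_divide)
      also have "\<dots> \<le> (\<bar>Gv - Gw\<bar> + \<bar>S1v - S1w\<bar> + \<bar>S2v - S2w\<bar>) / M j"
        using Mj by (intro divide_right_mono abs3) auto
      also have "\<dots> \<le> (\<bar>Lg j\<bar> * (sqrt (nd j) + 1) * d + (\<Sum>k\<in>{k. (j, k) \<in> E}. \<bar>B (j, k)\<bar>) * d + (\<Sum>i\<in>{i. (i, j) \<in> E}. \<bar>B (i, j)\<bar>) * d) / M j"
        using Mj G S1 S2 by (intro divide_right_mono add_mono) auto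
      also have "\<dots> = Kw j * d" unfolding Kw_def by (rule lin3)
      also have "\<dots> \<le> K * d" using K_ge(1)[OF j] d by (intro mult_right_mono) auto
      finally show ?thesis .
    qed
  next
    case (x j i)
    show ?thesis
    proof (cases "j \<in> {1..nN} \<and> i < nd j")
      case False
      then have "rhs \<sigma> v n = 0" "rhs \<sigma> w n = 0" by (simp_all only: x rhs_ix if_not_P[OF False] if_False)
      then show ?thesis using d K_ge(2) by simp
    next
      case True
      then have j: "j \<in> {1..nN}" and i: "i < nd j" by auto
      have "\<bar>rhs \<sigma> v n - rhs \<sigma> w n\<bar> = \<bar>f j (trunc (nd j) (\<lambda>i. v (ix j i))) (- v (io j)) i - f j (trunc (nd j) (\<lambda>i. w (ix j i))) (- w (io j)) i\<bar>"
        using True by (simp add: x rhs_ix)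
      also have "\<dots> \<le> vnorm (nd j) (\<lambda>i. f j (trunc (nd j) (\<lambda>i. v (ix j i))) (- v (io j)) i - f j (trunc (nd j) (\<lambda>i. w (ix j i))) (- w (io j)) i)"
        using comp_le_vnorm[OF i, of "\<lambda>i. f j (trunc (nd j) (\<lambda>i. v (ix j i))) (- v (io j)) i - f j (trunc (nd j) (\<lambda>i. w (ix j i))) (- w (io j)) i"] .
      also have "\<dots> \<le> Lf j * (vnorm (nd j) (\<lambda>i. v (ix j i) - w (ix j i)) + \<bar>- v (io j) - - w (io j)\<bar>)"
        by (rule Lf[OF j])
      finally have "\<bar>rhs \<sigma> v n - rhs \<sigma> w n\<bar> \<le> \<bar>Lf j\<bar> * (vnorm (nd j) (\<lambda>i. v (ix j i) - w (ix j i)) + \<bar>- v (io j) - - w (io j)\<bar>)"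
        by (rule abs_le_absL) (intro add_nonneg_nonneg vnorm_nonneg abs_ge_zero)
      also have "\<dots> \<le> \<bar>Lf j\<bar> * (sqrt (nd j) * d + d)"
      proof (intro mult_left_mono add_mono)
        show "vnorm (nd j) (\<lambda>i. v (ix j i) - w (ix j i)) \<le> sqrt (nd j) * d"
          by (rule vnorm_diff_le) (rule vw)
        show "\<bar>- v (io j) - - w (io j)\<bar> \<le> d" using vw[of "io j"] by linarith
      qed auto
      also have "\<dots> = Kx j * d" by (simp add: Kx_def algebra_simps)
      also have "\<dots> \<le> K * d" using K_ge(1)[OF j] d by (intro mult_right_mono) auto
      finally show ?thesis .
    qed
  qed
qed

end



lemma hstate_eqI:
  "st_eta a = st_eta b \<Longrightarrow> st_omega a = st_omega b \<Longrightarrow> st_xs a = st_xs b \<Longrightarrow> st_sigma a = st_sigma b \<Longrightarrow> a = b"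
  by (simp add: st_eta_def st_omega_def st_xs_def st_sigma_def prod_eq_iff)

lemma trunc_cong: "(\<And>i. i < m \<Longrightarrow> u i = u' i) \<Longrightarrow> trunc m u = trunc m u'"
  by (auto simp: trunc_def)

lemma omega_rhs_cong:
  assumes "\<And>e. e \<in> E \<Longrightarrow> st_eta z e = st_eta z' e" "st_omega z j = st_omega z' j"
    "\<And>i. i < nd j \<Longrightarrow> st_xs z j i = st_xs z' j i" "st_sigma z j = st_sigma z' j"
  shows "omega_rhs E M pL B dbar nd g z j = omega_rhs E M pL B dbar nd g z' j"
proof -
  have t: "trunc (nd j) (st_xs z j) = trunc (nd j) (st_xs z' j)" by (rule trunc_cong) (rule assms(3))
  have s1: "(\<Sum>k\<in>{k. (j, k) \<in> E}. B (j, k) * sin (st_eta z (j, k))) = (\<Sum>k\<in>{k. (j, k) \<in> E}. B (j, k) * sin (st_eta z' (j, k)))"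
    using assms(1) by (intro sum.cong) auto
  have s2: "(\<Sum>i\<in>{i. (i, j) \<in> E}. B (i, j) * sin (st_eta z (i, j))) = (\<Sum>i\<in>{i. (i, j) \<in> E}. B (i, j) * sin (st_eta z' (i, j)))"
    using assms(1) by (intro sum.cong) auto
  show ?thesis unfolding omega_rhs_def t s1 s2 assms(2) assms(4) ..
qed

lemma eval_bl: "bounded_linear (\<lambda>v. ev v n)"
proof (rule bounded_linear_intro[of _ 1])
  show "ev (x + y) n = ev x n + ev y n" for x y by (simp add: ev_def)
  show "ev (r *\<^sub>R x) n = r *\<^sub>R ev x n" for r x by (simp add: ev_def)
  show "norm (ev x n) \<le> norm x * 1" for x using norm_bounded[of x "discrete n"] by (simp add: ev_def)
qed

lemma comp_le_norm: "\<bar>ev v n - ev w n\<bar> \<le> norm (v - w)"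
  using norm_bounded[of "v - w" "discrete n"] by (simp add: ev_def)

context netw
begin

definition Fv :: "(nat \<Rightarrow> int) \<Rightarrow> (nat discrete \<Rightarrow>\<^sub>C real) \<Rightarrow> (nat discrete \<Rightarrow>\<^sub>C real)" where
  "Fv \<sigma> v = mk (rhs \<sigma> (ev v))"

lemma Fv_apply: "ev (Fv \<sigma> v) = rhs \<sigma> (ev v)" "apply_bcontfun (Fv \<sigma> v) d = rhs \<sigma> (ev v) (of_discrete d)"
proof -
  have z: "\<And>n. n \<notin> Idx \<Longrightarrow> rhs \<sigma> (ev v) n = 0" by (rule rhs_supp)
  show "ev (Fv \<sigma> v) = rhs \<sigma> (ev v)" "apply_bcontfun (Fv \<sigma> v) d = rhs \<sigma> (ev v) (of_discrete d)"
    unfolding Fv_def using ev_mk[OF finIdx z] by auto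
qed

lemma Fv_lip: "norm (Fv \<sigma> v - Fv \<sigma> w) \<le> K * norm (v - w)"
proof (rule norm_bound)
  fix d
  have "norm (apply_bcontfun (Fv \<sigma> v - Fv \<sigma> w) d) = \<bar>rhs \<sigma> (ev v) (of_discrete d) - rhs \<sigma> (ev w) (of_discrete d)\<bar>"
    by (simp add: Fv_apply)
  also have "\<dots> \<le> K * norm (v - w)"
    by (rule rhs_lip) (rule comp_le_norm)
  finally show "norm (apply_bcontfun (Fv \<sigma> v - Fv \<sigma> w) d) \<le> K * norm (v - w)" .
qed

lemma Fv_cont: "continuous_on UNIV (Fv \<sigma>)"
proof -
  have "(max K 0)-lipschitz_on UNIV (Fv \<sigma>)"
  proof (rule lipschitz_onI)
    fix x y
    have "norm (Fv \<sigma> x - Fv \<sigma> y) \<le> K * norm (x - y)" by (rule Fv_lip)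
    also have "\<dots> \<le> max K 0 * norm (x - y)" by (intro mult_right_mono) auto
    finally show "dist (Fv \<sigma> x) (Fv \<sigma> y) \<le> max K 0 * dist x y" by (simp add: dist_norm)
  qed auto
  then show ?thesis by (rule lipschitz_on_continuous_on)
qed

definition raw :: "hstate \<Rightarrow> nat \<Rightarrow> real" where
  "raw s n = (if n mod 3 = 0 then (if prod_decode (n div 3) \<in> E then st_eta s (prod_decode (n div 3)) else 0)
    else if n mod 3 = 1 then (if n div 3 \<in> {1..nN} then st_omega s (n div 3) else 0)
    else (if fst (prod_decode (n div 3)) \<in> {1..nN} \<and> snd (prod_decode (n div 3)) < nd (fst (prod_decode (n div 3)))
          then st_xs s (fst (prod_decode (n div 3))) (snd (prod_decode (n div 3))) else 0))"

lemma raw_ie: "raw s (ie e) = (if e \<in> E then st_eta s e else 0)"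
  by (simp add: raw_def ie_mod)
lemma raw_io: "raw s (io j) = (if j \<in> {1..nN} then st_omega s j else 0)"
  by (simp add: raw_def io_mod)
lemma raw_ix: "raw s (ix j i) = (if j \<in> {1..nN} \<and> i < nd j then st_xs s j i else 0)"
  by (simp add: raw_def ix_mod)

lemma raw_supp: assumes "n \<notin> Idx" shows "raw s n = 0"
proof (cases n rule: idx_cases)
  case (e e)
  then show ?thesis using assms by (auto simp: raw_ie Idx_def)
next
  case (o j)
  then show ?thesis using assms by (auto simp: raw_io Idx_def)
next
  case (x j i)
  then show ?thesis using assms by (auto simp: raw_ix Idx_def)
qed

definition enc :: "hstate \<Rightarrow> nat discrete \<Rightarrow>\<^sub>C real" where "enc s = mk (raw s)"

lemma enc_apply: "ev (enc s) = raw s"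
proof -
  have z: "\<And>n. n \<notin> Idx \<Longrightarrow> raw s n = 0" by (rule raw_supp)
  show ?thesis unfolding enc_def using ev_mk[OF finIdx z] by auto
qed

definition dec :: "hstate \<Rightarrow> (nat \<Rightarrow> real) \<Rightarrow> hstate" where
  "dec s v = ((\<lambda>e. if e \<in> E then v (ie e) else st_eta s e),
              (\<lambda>j. if j \<in> {1..nN} then v (io j) else st_omega s j),
              (\<lambda>j i. if j \<in> {1..nN} \<and> i < nd j then v (ix j i) else st_xs s j i),
              st_sigma s)"

lemma dec_simps:
  "st_eta (dec s v) e = (if e \<in> E then v (ie e) else st_eta s e)"
  "st_omega (dec s v) j = (if j \<in> {1..nN} then v (io j) else st_omega s j)"
  "st_xs (dec s v) j i = (if j \<in> {1..nN} \<and> i < nd j then v (ix j i) else st_xs s j i)"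
  "st_sigma (dec s v) = st_sigma s"
  by (simp_all add: dec_def st_eta_def st_omega_def st_xs_def st_sigma_def)

lemma dec_raw: "dec s (raw s) = s"
  by (rule hstate_eqI) (auto simp: dec_simps raw_ie raw_io raw_ix fun_eq_iff)

definition Xsol :: "hstate \<Rightarrow> real \<Rightarrow> real \<Rightarrow> nat discrete \<Rightarrow>\<^sub>C real" where
  "Xsol s c = (SOME X. X c = enc s \<and> (\<forall>t\<ge>c. (X has_vector_derivative Fv (st_sigma s) (X t)) (at t within {c..})))"

lemma Xsol: "Xsol s c c = enc s" "\<forall>t\<ge>c. (Xsol s c has_vector_derivative Fv (st_sigma s) (Xsol s c t)) (at t within {c..})"
proof -
  have "\<exists>X. X c = enc s \<and> (\<forall>t\<ge>c. (X has_vector_derivative Fv (st_sigma s) (X t)) (at t within {c..}))"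
    by (rule ode_global[where F="Fv (st_sigma s)" and L=K]) (rule Fv_lip)
  then have "Xsol s c c = enc s \<and> (\<forall>t\<ge>c. (Xsol s c has_vector_derivative Fv (st_sigma s) (Xsol s c t)) (at t within {c..}))"
    unfolding Xsol_def by (rule someI_ex)
  then show "Xsol s c c = enc s" "\<forall>t\<ge>c. (Xsol s c has_vector_derivative Fv (st_sigma s) (Xsol s c t)) (at t within {c..})"
    by auto
qed

definition Fl :: "hstate \<Rightarrow> real \<Rightarrow> real \<Rightarrow> hstate" where
  "Fl s c t = dec s (ev (Xsol s c t))"

lemma Fl_init: "Fl s c c = s"
  by (simp add: Fl_def Xsol(1) enc_apply dec_raw)

lemma Fl_sigma: "st_sigma (Fl s c t) = st_sigma s"
  by (simp add: Fl_def dec_simps)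

lemma comp_deriv:
  assumes "t \<ge> c"
  shows "((\<lambda>u. ev (Xsol s c u) n) has_real_derivative rhs (st_sigma s) (ev (Xsol s c t)) n) (at t within {c..})"
proof -
  have "((\<lambda>u. ev (Xsol s c u) n) has_vector_derivative ev (Fv (st_sigma s) (Xsol s c t)) n) (at t within {c..})"
    by (rule bounded_linear.has_vector_derivative[OF eval_bl]) (use Xsol(2) assms in blast)
  then show ?thesis by (simp add: Fv_apply has_real_derivative_iff_has_vector_derivative)
qed

lemma comp_lac: "loc_abs_cont_on {c..} (\<lambda>u. ev (Xsol s c u) n)"
  unfolding loc_abs_cont_on_def
proof (intro allI impI)
  fix a b :: real assume ab: "{a..b} \<subseteq> {c..}"
  obtain C where C: "\<forall>x\<in>{a..b}. \<forall>y\<in>{a..b}. norm (Xsol s c x - Xsol s c y) \<le> C * \<bar>x - y\<bar>"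
    using ode_sol_lip[where F="Fv (st_sigma s)" and X="Xsol s c", OF Xsol(2) Fv_cont ab] by blast
  show "abs_cont_on {a..b} (\<lambda>u. ev (Xsol s c u) n)"
  proof (rule abs_cont_of_lip)
    fix x y assume "x \<in> {a..b}" "y \<in> {a..b}"
    then show "\<bar>ev (Xsol s c x) n - ev (Xsol s c y) n\<bar> \<le> C * \<bar>x - y\<bar>"
      using C comp_le_norm[of "Xsol s c x" n "Xsol s c y"] by force
  qed
qed

lemma comp_cont: "continuous_on {c..} (\<lambda>u. ev (Xsol s c u) n)"
  unfolding continuous_on_eq_continuous_within
  using comp_deriv has_derivative_continuous unfolding has_field_derivative_def by blast

lemma Fl_eta: "e \<in> E \<Longrightarrow> st_eta (Fl s c t) e = ev (Xsol s c t) (ie e)"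
  by (simp add: Fl_def dec_simps)
lemma Fl_omega: "j \<in> {1..nN} \<Longrightarrow> st_omega (Fl s c t) j = ev (Xsol s c t) (io j)"
  by (simp add: Fl_def dec_simps)
lemma Fl_xs: "j \<in> {1..nN} \<Longrightarrow> i < nd j \<Longrightarrow> st_xs (Fl s c t) j i = ev (Xsol s c t) (ix j i)"
  by (simp add: Fl_def dec_simps)

lemma Fl_omega_cont: "j \<in> {1..nN} \<Longrightarrow> continuous_on {c..} (\<lambda>t. st_omega (Fl s c t) j)"
  by (simp add: Fl_omega comp_cont)

lemma Fl_lac:
  "e \<in> E \<Longrightarrow> loc_abs_cont_on {c..} (\<lambda>t. st_eta (Fl s c t) e)"
  "j \<in> {1..nN} \<Longrightarrow> loc_abs_cont_on {c..} (\<lambda>t. st_omega (Fl s c t) j)"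
  "j \<in> {1..nN} \<Longrightarrow> i < nd j \<Longrightarrow> loc_abs_cont_on {c..} (\<lambda>t. st_xs (Fl s c t) j i)"
  by (simp_all add: Fl_eta Fl_omega Fl_xs comp_lac)

lemma Fl_deriv_eta:
  assumes "t \<ge> c" "(i, j) \<in> E"
  shows "((\<lambda>u. st_eta (Fl s c u) (i, j)) has_real_derivative (st_omega (Fl s c t) i - st_omega (Fl s c t) j)) (at t within {c..})"
proof -
  have ij: "i \<in> {1..nN}" "j \<in> {1..nN}" using assms(2) netE by auto
  show ?thesis
    using comp_deriv[OF assms(1), of s "ie (i, j)"] assms(2) ij
    by (simp add: Fl_eta Fl_omega rhs_ie)
qed

lemma Fl_deriv_omega:
  assumes "t \<ge> c" "j \<in> {1..nN}"
  shows "((\<lambda>u. st_omega (Fl s c u) j) has_real_derivative omega_rhs E M pL B dbar nd g (Fl s c t) j) (at t within {c..})"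
proof -
  have "omega_rhs E M pL B dbar nd g (zz (ev (Xsol s c t)) (st_sigma s)) j = omega_rhs E M pL B dbar nd g (Fl s c t) j"
  proof (rule omega_rhs_cong)
    show "st_eta (zz (ev (Xsol s c t)) (st_sigma s)) e = st_eta (Fl s c t) e" if "e \<in> E" for e
      using that by (simp add: zz_simps Fl_eta)
    show "st_omega (zz (ev (Xsol s c t)) (st_sigma s)) j = st_omega (Fl s c t) j"
      using assms by (simp add: zz_simps Fl_omega)
    show "st_xs (zz (ev (Xsol s c t)) (st_sigma s)) j i = st_xs (Fl s c t) j i" if "i < nd j" for i
      using that assms by (simp add: zz_simps Fl_xs)
    show "st_sigma (zz (ev (Xsol s c t)) (st_sigma s)) j = st_sigma (Fl s c t) j"
      by (simp add: zz_simps Fl_sigma)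
  qed
  then show ?thesis
    using comp_deriv[OF assms(1), of s "io j"] assms
    by (simp add: Fl_omega rhs_io)
qed

lemma Fl_deriv_xs:
  assumes "t \<ge> c" "j \<in> {1..nN}" "i < nd j"
  shows "((\<lambda>u. st_xs (Fl s c u) j i) has_real_derivative
            f j (trunc (nd j) (st_xs (Fl s c t) j)) (- st_omega (Fl s c t) j) i) (at t within {c..})"
proof -
  have tr: "trunc (nd j) (\<lambda>i. ev (Xsol s c t) (ix j i)) = trunc (nd j) (st_xs (Fl s c t) j)"
    by (rule trunc_cong) (rule Fl_xs[OF assms(2), symmetric])
  have "((\<lambda>u. ev (Xsol s c u) (ix j i)) has_real_derivative
       f j (trunc (nd j) (\<lambda>i. ev (Xsol s c t) (ix j i))) (- ev (Xsol s c t) (io j)) i) (at t within {c..})"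
    using comp_deriv[OF assms(1), of s "ix j i"] assms by (simp add: rhs_ix)
  then show ?thesis
    unfolding tr using assms by (simp add: Fl_xs Fl_omega)
qed

end



definition bad :: "int \<Rightarrow> real \<Rightarrow> real \<Rightarrow> real \<Rightarrow> bool" where
  "bad \<sigma> a b x \<longleftrightarrow> (\<sigma> = 0 \<and> b \<le> \<bar>x\<bar>) \<or> (\<sigma> = 1 \<and> x \<le> a) \<or> (\<sigma> = -1 \<and> - a \<le> x)"

definition wgood :: "int \<Rightarrow> real \<Rightarrow> real \<Rightarrow> real \<Rightarrow> bool" where
  "wgood \<sigma> a b x \<longleftrightarrow> (\<sigma> = 0 \<and> \<bar>x\<bar> \<le> b) \<or> (\<sigma> = 1 \<and> a \<le> x) \<or> (\<sigma> = -1 \<and> x \<le> - a)"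

lemma hsgn_pos: "0 \<le> x \<Longrightarrow> hsgn x = 1" and hsgn_neg: "x < 0 \<Longrightarrow> hsgn x = -1"
  by (auto simp: hsgn_def)

lemma Iset_cases: "\<sigma> \<in> Iset a b x \<Longrightarrow> \<sigma> \<in> {-1, 0, 1}"
  by (auto simp: Iset_def hsgn_def split: if_splits)

lemma Lambda_wgood: "0 < a \<Longrightarrow> a < b \<Longrightarrow> \<sigma> \<in> Iset a b x \<Longrightarrow> wgood \<sigma> a b x"
  by (cases "0 \<le> x") (auto simp: Iset_def wgood_def hsgn_def split: if_splits)

lemma wgood_Lambda: "0 < a \<Longrightarrow> a < b \<Longrightarrow> wgood \<sigma> a b x \<Longrightarrow> \<sigma> \<in> Iset a b x"
  by (cases "0 \<le> x") (auto simp: Iset_def wgood_def hsgn_def)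

lemma notbad_wgood: "\<sigma> \<in> {-1, 0, 1} \<Longrightarrow> \<not> bad \<sigma> a b x \<Longrightarrow> wgood \<sigma> a b x"
  by (auto simp: bad_def wgood_def)

lemma bad_wgood_D: "0 < a \<Longrightarrow> bad \<sigma> a b x \<Longrightarrow> wgood \<sigma> a b x \<Longrightarrow> (\<bar>x\<bar> = b \<and> \<sigma> = 0) \<or> (\<bar>x\<bar> = a \<and> \<sigma> = hsgn x)"
  by (auto simp: bad_def wgood_def hsgn_def)

lemma closed_bad: "closed {x::real. bad \<sigma> a b x}"
proof -
  have "{x::real. bad \<sigma> a b x} = (if \<sigma> = 0 then {x. b \<le> \<bar>x\<bar>} else if \<sigma> = 1 then {..a} else if \<sigma> = -1 then {-a..} else {})"
    by (auto simp: bad_def)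
  moreover have "closed {x::real. b \<le> \<bar>x\<bar>}"
    by (intro closed_Collect_le continuous_intros)
  ultimately show ?thesis by auto
qed

lemma wgood_limit:
  fixes h :: "real \<Rightarrow> real"
  assumes hc: "continuous_on {c..\<tau>} h" and ct: "c < \<tau>" and g: "\<And>t. t \<in> {c..<\<tau>} \<Longrightarrow> wgood \<sigma> a b (h t)"
  shows "wgood \<sigma> a b (h \<tau>)"
proof -
  have cl: "closure {c..<\<tau>} = {c..\<tau>}" using ct by (simp add: closure_atLeastLessThan)
  have tin: "\<tau> \<in> closure {c..<\<tau>}" using ct cl by auto
  have "c \<in> {c..<\<tau>}" using ct by auto
  then have sig: "\<sigma> \<in> {-1, 0, 1}" using g by (auto simp: wgood_def)
  have hc': "continuous_on (closure {c..<\<tau>}) h" using hc cl by simp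
  show ?thesis
  proof (cases "\<sigma> = 0")
    case True
    have "\<bar>h \<tau>\<bar> \<le> b"
      by (rule continuous_le_on_closure[OF _ tin, of "\<lambda>t. \<bar>h t\<bar>"])
        (use hc' in \<open>auto intro: continuous_intros\<close>, use g True in \<open>auto simp: wgood_def\<close>)
    then show ?thesis using True by (simp add: wgood_def)
  next
    case s0: False
    show ?thesis
    proof (cases "\<sigma> = 1")
      case True
      have "- h \<tau> \<le> - a"
        by (rule continuous_le_on_closure[OF _ tin, of "\<lambda>t. - h t"])
          (use hc' in \<open>auto intro: continuous_intros\<close>, use g True in \<open>auto simp: wgood_def\<close>)
      then show ?thesis using True by (simp add: wgood_def)
    next
      case False
      then have s: "\<sigma> = -1" using sig s0 by auto
      have "h \<tau> \<le> - a"
        by (rule continuous_le_on_closure[OF hc' tin]) (use g s in \<open>auto simp: wgood_def\<close>)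
      then show ?thesis using s by (simp add: wgood_def)
    qed
  qed
qed

definition jumpst :: "(nat \<Rightarrow> real) \<Rightarrow> (nat \<Rightarrow> real) \<Rightarrow> hstate \<Rightarrow> hstate" where
  "jumpst w0 w1 z = (st_eta z, st_omega z, st_xs z, sigma_jump w0 w1 z)"

lemma jumpst_simps: "st_eta (jumpst w0 w1 z) = st_eta z" "st_omega (jumpst w0 w1 z) = st_omega z"
  "st_xs (jumpst w0 w1 z) = st_xs z" "st_sigma (jumpst w0 w1 z) = sigma_jump w0 w1 z"
  by (simp_all add: jumpst_def st_eta_def st_omega_def st_xs_def st_sigma_def)

lemma jump_is_jump: "is_jump nN E nd w0 w1 z (jumpst w0 w1 z)"
  by (simp add: is_jump_def jumpst_simps)

lemma jump_Lambda:
  assumes w: "\<forall>j\<in>{1..nN}. 0 < w0 j \<and> w0 j < w1 j" and z: "inLambda nN w0 w1 z"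
  shows "inLambda nN w0 w1 (jumpst w0 w1 z)"
  unfolding inLambda_def
proof
  fix j assume j: "j \<in> {1..nN}"
  have wj: "0 < w0 j" "w0 j < w1 j" using w j by auto
  have zj: "st_sigma z j \<in> Iset (w0 j) (w1 j) (st_omega z j)" using z j by (auto simp: inLambda_def)
  show "st_sigma (jumpst w0 w1 z) j \<in> Iset (w0 j) (w1 j) (st_omega (jumpst w0 w1 z) j)"
    using wj zj by (auto simp: jumpst_simps sigma_jump_def Iset_def)
qed

locale hyb = netw +
  fixes w0 w1 :: "nat \<Rightarrow> real"
  assumes wpos: "\<forall>j\<in>{1..nN}. 0 < w0 j \<and> w0 j < w1 j"
begin

definition Bset :: "hstate \<Rightarrow> real \<Rightarrow> real set" where
  "Bset s c = {t. c \<le> t \<and> (\<exists>j\<in>{1..nN}. bad (st_sigma s j) (w0 j) (w1 j) (st_omega (Fl s c t) j))}"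

definition hit :: "hstate \<Rightarrow> real \<Rightarrow> real" where
  "hit s c = (if Bset s c = {} then c else Inf (Bset s c))"

lemma Bset_closed: "closed (Bset s c)"
proof -
  have "Bset s c = (\<Union>j\<in>{1..nN}. {c..} \<inter> (\<lambda>t. st_omega (Fl s c t) j) -` {x. bad (st_sigma s j) (w0 j) (w1 j) x})"
    by (auto simp: Bset_def)
  moreover have "closed (\<Union>j\<in>{1..nN}. {c..} \<inter> (\<lambda>t. st_omega (Fl s c t) j) -` {x. bad (st_sigma s j) (w0 j) (w1 j) x})"
  proof (rule closed_UN)
    show "\<forall>j\<in>{1..nN}. closed ({c..} \<inter> (\<lambda>t. st_omega (Fl s c t) j) -` {x. bad (st_sigma s j) (w0 j) (w1 j) x})"
    proof
      fix j assume j: "j \<in> {1..nN}"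
      show "closed ({c..} \<inter> (\<lambda>t. st_omega (Fl s c t) j) -` {x. bad (st_sigma s j) (w0 j) (w1 j) x})"
        by (rule continuous_closed_preimage[OF Fl_omega_cont[OF j] closed_atLeast closed_bad])
    qed
  qed auto
  ultimately show ?thesis by simp
qed

lemma Bset_ge: "t \<in> Bset s c \<Longrightarrow> c \<le> t"
  by (simp add: Bset_def)

lemma Bset_bdd: "bdd_below (Bset s c)"
  by (rule bdd_belowI[of _ c]) (rule Bset_ge)

lemma hit_ge: "c \<le> hit s c"
proof (cases "Bset s c = {}")
  case False
  then have "c \<le> Inf (Bset s c)" by (rule cInf_greatest) (rule Bset_ge)
  then show ?thesis using False by (simp add: hit_def)
qed (simp add: hit_def)

lemma hit_in: assumes ne: "Bset s c \<noteq> {}" shows "hit s c \<in> Bset s c"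
proof -
  have "Inf (Bset s c) \<in> Bset s c" by (rule closed_contains_Inf[OF ne Bset_bdd Bset_closed])
  then show ?thesis using ne by (simp add: hit_def)
qed

lemma before_hit: assumes "c \<le> t" "Bset s c \<noteq> {} \<Longrightarrow> t < hit s c" shows "t \<notin> Bset s c"
proof
  assume t: "t \<in> Bset s c"
  then have ne: "Bset s c \<noteq> {}" by auto
  have "Inf (Bset s c) \<le> t" by (rule cInf_lower[OF t Bset_bdd])
  then show False using assms(2)[OF ne] ne by (simp add: hit_def)
qed

lemma stage_Lambda:
  assumes s: "inLambda nN w0 w1 s" and t: "c \<le> t" and th: "Bset s c \<noteq> {} \<Longrightarrow> t \<le> hit s c"
  shows "\<forall>j\<in>{1..nN}. wgood (st_sigma s j) (w0 j) (w1 j) (st_omega (Fl s c t) j)"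
proof
  fix j assume j: "j \<in> {1..nN}"
  have wj: "0 < w0 j" "w0 j < w1 j" using wpos j by auto
  have sj: "st_sigma s j \<in> Iset (w0 j) (w1 j) (st_omega s j)" using s j by (auto simp: inLambda_def)
  then have sig: "st_sigma s j \<in> {-1, 0, 1}" by (rule Iset_cases)
  have good: "wgood (st_sigma s j) (w0 j) (w1 j) (st_omega (Fl s c u) j)" if "c \<le> u" "Bset s c \<noteq> {} \<Longrightarrow> u < hit s c" for u
    using before_hit[OF that] that j sig by (auto simp: Bset_def intro: notbad_wgood)
  show "wgood (st_sigma s j) (w0 j) (w1 j) (st_omega (Fl s c t) j)"
  proof (cases "Bset s c \<noteq> {} \<and> t = hit s c")
    case False
    then show ?thesis using good t th by force
  next
    case True
    show ?thesis
    proof (cases "c < t")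
      case ct: True
      show ?thesis
      proof (rule wgood_limit[OF _ ct])
        show "continuous_on {c..t} (\<lambda>u. st_omega (Fl s c u) j)"
          by (rule continuous_on_subset[OF Fl_omega_cont[OF j]]) auto
        show "wgood (st_sigma s j) (w0 j) (w1 j) (st_omega (Fl s c u) j)" if "u \<in> {c..<t}" for u
          using that True by (intro good) auto
      qed
    next
      case False
      then have "t = c" using t by auto
      then show ?thesis using Lambda_wgood[OF wj sj] by (simp add: Fl_init)
    qed
  qed
qed

lemma stage_Lambda':
  assumes s: "inLambda nN w0 w1 s" and t: "c \<le> t" and th: "Bset s c \<noteq> {} \<Longrightarrow> t \<le> hit s c"
  shows "inLambda nN w0 w1 (Fl s c t)"
  unfolding inLambda_def
proof
  fix j assume j: "j \<in> {1..nN}"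
  have wj: "0 < w0 j" "w0 j < w1 j" using wpos j by auto
  show "st_sigma (Fl s c t) j \<in> Iset (w0 j) (w1 j) (st_omega (Fl s c t) j)"
    using wgood_Lambda[OF wj] stage_Lambda[OF assms] j by (simp add: Fl_sigma)
qed

lemma stage_D:
  assumes s: "inLambda nN w0 w1 s" and ne: "Bset s c \<noteq> {}"
  shows "inD nN w0 w1 (Fl s c (hit s c))"
proof -
  have hin: "hit s c \<in> Bset s c" by (rule hit_in[OF ne])
  then obtain j where j: "j \<in> {1..nN}" and b: "bad (st_sigma s j) (w0 j) (w1 j) (st_omega (Fl s c (hit s c)) j)"
    by (auto simp: Bset_def)
  have g: "wgood (st_sigma s j) (w0 j) (w1 j) (st_omega (Fl s c (hit s c)) j)"
    using stage_Lambda[OF s hit_ge] j by auto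
  have "0 < w0 j" using wpos j by auto
  from bad_wgood_D[OF this b g] j
  show ?thesis
    unfolding inD_def using stage_Lambda'[OF s hit_ge] by (auto simp: Fl_sigma)
qed

end



context hyb
begin

fun seqf :: "hstate \<Rightarrow> nat \<Rightarrow> hstate \<times> real" where
  "seqf z0 0 = (z0, 0)"
| "seqf z0 (Suc l) = (jumpst w0 w1 (Fl (fst (seqf z0 l)) (snd (seqf z0 l)) (hit (fst (seqf z0 l)) (snd (seqf z0 l)))),
                     hit (fst (seqf z0 l)) (snd (seqf z0 l)))"

definition stt :: "hstate \<Rightarrow> nat \<Rightarrow> hstate" where "stt z0 l = fst (seqf z0 l)"
definition tt :: "hstate \<Rightarrow> nat \<Rightarrow> real" where "tt z0 l = snd (seqf z0 l)"
definition stop :: "hstate \<Rightarrow> nat \<Rightarrow> bool" where "stop z0 l \<longleftrightarrow> Bset (stt z0 l) (tt z0 l) = {}"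
definition KK :: "hstate \<Rightarrow> (real \<times> nat) set" where
  "KK z0 = {(t, l). (\<forall>m<l. \<not> stop z0 m) \<and> tt z0 l \<le> t \<and> (\<not> stop z0 l \<longrightarrow> t \<le> tt z0 (Suc l))}"
definition zsol :: "hstate \<Rightarrow> real \<Rightarrow> nat \<Rightarrow> hstate" where
  "zsol z0 t l = Fl (stt z0 l) (tt z0 l) t"

lemma tt_0: "tt z0 0 = 0" and stt_0: "stt z0 0 = z0"
  by (simp_all add: tt_def stt_def)

lemma tt_Suc: "tt z0 (Suc l) = hit (stt z0 l) (tt z0 l)"
  by (simp add: tt_def stt_def)

lemma stt_Suc: "stt z0 (Suc l) = jumpst w0 w1 (Fl (stt z0 l) (tt z0 l) (hit (stt z0 l) (tt z0 l)))"
  by (simp add: tt_def stt_def)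

lemma tt_mono: "mono (tt z0)"
  by (rule incseq_SucI) (simp add: tt_Suc hit_ge)

lemma stt_Lambda:
  assumes z0: "inLambda nN w0 w1 z0"
  shows "(\<forall>m<l. \<not> stop z0 m) \<Longrightarrow> inLambda nN w0 w1 (stt z0 l)"
proof (induction l)
  case 0
  then show ?case using z0 by (simp add: stt_0)
next
  case (Suc l)
  then have ns: "\<not> stop z0 l" and prev: "\<forall>m<l. \<not> stop z0 m" by auto
  have L: "inLambda nN w0 w1 (stt z0 l)" using Suc.IH prev by blast
  have "inD nN w0 w1 (Fl (stt z0 l) (tt z0 l) (hit (stt z0 l) (tt z0 l)))"
    using stage_D[OF L] ns by (simp add: stop_def)
  then have "inLambda nN w0 w1 (Fl (stt z0 l) (tt z0 l) (hit (stt z0 l) (tt z0 l)))"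
    by (simp add: inD_def)
  then show ?case unfolding stt_Suc by (rule jump_Lambda[OF wpos])
qed

lemma tdom_KK: "t \<in> tdom (KK z0) l \<longleftrightarrow> (\<forall>m<l. \<not> stop z0 m) \<and> tt z0 l \<le> t \<and> (\<not> stop z0 l \<longrightarrow> t \<le> tt z0 (Suc l))"
  by (simp add: tdom_def KK_def)

lemma tdom_sub: "tdom (KK z0) l \<subseteq> {tt z0 l..}"
  by (auto simp: tdom_KK)

lemma KK_Lambda:
  assumes z0: "inLambda nN w0 w1 z0" and t: "t \<in> tdom (KK z0) l"
  shows "inLambda nN w0 w1 (zsol z0 t l)"
proof -
  have H: "\<forall>m<l. \<not> stop z0 m" "tt z0 l \<le> t" "\<not> stop z0 l \<longrightarrow> t \<le> tt z0 (Suc l)"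
    using t by (auto simp: tdom_KK)
  show ?thesis unfolding zsol_def
    by (rule stage_Lambda'[OF stt_Lambda[OF z0 H(1)] H(2)]) (use H(3) in \<open>simp add: stop_def tt_Suc\<close>)
qed

lemma KK_htd: "hybrid_time_domain (KK z0)"
  unfolding hybrid_time_domain_def
proof (intro exI[of _ "tt z0"] conjI)
  show "tt z0 0 = 0" by (rule tt_0)
  show "mono (tt z0)" by (rule tt_mono)
  have mono': "tt z0 l \<le> tt z0 (Suc l)" for l using tt_mono[of z0] by (simp add: incseq_Suc_iff)
  show "KK z0 = (\<Union>l. {tt z0 l..tt z0 (Suc l)} \<times> {l}) \<or>
    (\<exists>J I. KK z0 = (\<Union>l<J. {tt z0 l..tt z0 (Suc l)} \<times> {l}) \<union> I \<times> {J} \<and>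
           (I = {tt z0 J..tt z0 (Suc J)} \<or> I = {tt z0 J..<tt z0 (Suc J)} \<or> I = {tt z0 J..}))"
  proof (cases "\<exists>l. stop z0 l")
    case False
    then have "KK z0 = (\<Union>l. {tt z0 l..tt z0 (Suc l)} \<times> {l})"
      by (auto simp: KK_def)
    then show ?thesis by blast
  next
    case True
    define J where "J = (LEAST l. stop z0 l)"
    have sJ: "stop z0 J" unfolding J_def using True by (metis LeastI)
    have nsJ: "\<And>m. m < J \<Longrightarrow> \<not> stop z0 m" unfolding J_def by (rule not_less_Least)
    have "KK z0 = (\<Union>l<J. {tt z0 l..tt z0 (Suc l)} \<times> {l}) \<union> {tt z0 J..} \<times> {J}"
    proof (intro set_eqI iffI)
      fix x assume x: "x \<in> KK z0"
      obtain t l where tl: "x = (t, l)" by (cases x)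
      have H: "\<forall>m<l. \<not> stop z0 m" "tt z0 l \<le> t" "\<not> stop z0 l \<longrightarrow> t \<le> tt z0 (Suc l)"
        using x by (auto simp: tl KK_def)
      have "l \<le> J" using H(1) sJ by (meson not_le)
      then show "x \<in> (\<Union>l<J. {tt z0 l..tt z0 (Suc l)} \<times> {l}) \<union> {tt z0 J..} \<times> {J}"
        using H nsJ by (cases "l = J") (auto simp: tl)
    next
      fix x assume x: "x \<in> (\<Union>l<J. {tt z0 l..tt z0 (Suc l)} \<times> {l}) \<union> {tt z0 J..} \<times> {J}"
      then show "x \<in> KK z0"
        using nsJ sJ by (auto simp: KK_def)
    qed
    then show ?thesis by blast
  qed
qed

lemma KK_complete: "complete_domain (KK z0)"
  unfolding complete_domain_def
proof
  assume "bounded ((\<lambda>(t, l). (t, real l)) ` KK z0)"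
  then obtain R where R0: "\<forall>x\<in>(\<lambda>(t, l). (t, real l)) ` KK z0. norm x \<le> R"
    unfolding bounded_iff by blast
  then have R: "\<And>x. x \<in> (\<lambda>(t, l). (t, real l)) ` KK z0 \<Longrightarrow> norm x \<le> R" by blast
  have mono': "tt z0 l \<le> tt z0 (Suc l)" for l using tt_mono[of z0] by (simp add: incseq_Suc_iff)
  show False
  proof (cases "\<exists>l. stop z0 l")
    case False
    obtain l :: nat where l: "R < real l" using reals_Archimedean2 by blast
    have "(tt z0 l, l) \<in> KK z0" using False mono' by (auto simp: KK_def)
    then have "norm (tt z0 l, real l) \<le> R" by (intro R) force
    moreover have "real l \<le> norm (tt z0 l, real l)"
      using norm_snd_le[of "real l" "tt z0 l"] by simp
    ultimately show False using l by simp
  next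
    case True
    define J where "J = (LEAST l. stop z0 l)"
    have sJ: "stop z0 J" unfolding J_def using True by (metis LeastI)
    have nsJ: "\<And>m. m < J \<Longrightarrow> \<not> stop z0 m" unfolding J_def by (rule not_less_Least)
    define t where "t = max (tt z0 J) (R + 1)"
    have "(t, J) \<in> KK z0" using sJ nsJ by (auto simp: KK_def t_def)
    then have "norm (t, real J) \<le> R" by (intro R) force
    moreover have "t \<le> norm (t, real J)"
      using norm_fst_le[of t "real J"] by simp
    ultimately show False by (simp add: t_def)
  qed
qed

lemma main:
  assumes z0: "inLambda nN w0 w1 z0"
  shows "is_hybrid_solution nN E M pL B nd f g dbar w0 w1 (KK z0) (zsol z0) \<and> zsol z0 0 0 = z0 \<and> complete_domain (KK z0)"
proof -
  have z00: "zsol z0 0 0 = z0" by (simp add: zsol_def tt_0 stt_0 Fl_init)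
  have mono': "tt z0 l \<le> tt z0 (Suc l)" for l using tt_mono[of z0] by (simp add: incseq_Suc_iff)
  have in00: "(0, 0) \<in> KK z0" using mono'[of 0] by (simp add: KK_def tt_0)
  have per_l: "(\<forall>e\<in>E. loc_abs_cont_on (tdom (KK z0) l) (\<lambda>t. st_eta (zsol z0 t l) e)) \<and>
       (\<forall>j\<in>{1..nN}. loc_abs_cont_on (tdom (KK z0) l) (\<lambda>t. st_omega (zsol z0 t l) j) \<and>
          (\<forall>i<nd j. loc_abs_cont_on (tdom (KK z0) l) (\<lambda>t. st_xs (zsol z0 t l) j i)) \<and>
          (\<forall>t\<in>tdom (KK z0) l. \<forall>s\<in>tdom (KK z0) l. st_sigma (zsol z0 t l) j = st_sigma (zsol z0 s l) j)) \<and>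
       (\<forall>t\<in>interior (tdom (KK z0) l). inLambda nN w0 w1 (zsol z0 t l)) \<and>
       (AE t in lebesgue. t \<in> tdom (KK z0) l \<longrightarrow>
          (\<forall>(i, j)\<in>E. ((\<lambda>s. st_eta (zsol z0 s l) (i, j)) has_real_derivative
                 (st_omega (zsol z0 t l) i - st_omega (zsol z0 t l) j)) (at t within tdom (KK z0) l)) \<and>
          (\<forall>j\<in>{1..nN}.
             ((\<lambda>s. st_omega (zsol z0 s l) j) has_real_derivative
                 omega_rhs E M pL B dbar nd g (zsol z0 t l) j) (at t within tdom (KK z0) l) \<and>
             (\<forall>i<nd j. ((\<lambda>s. st_xs (zsol z0 s l) j i) has_real_derivative
                 f j (trunc (nd j) (st_xs (zsol z0 t l) j)) (- st_omega (zsol z0 t l) j) i) (at t within tdom (KK z0) l)))) \<and>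
       (\<forall>t. (t, l) \<in> KK z0 \<and> (t, Suc l) \<in> KK z0 \<longrightarrow>
          inD nN w0 w1 (zsol z0 t l) \<and> is_jump nN E nd w0 w1 (zsol z0 t l) (zsol z0 t (Suc l)))" for l
  proof (intro conjI ballI allI impI)
    let ?T = "tdom (KK z0) l"
    let ?s = "stt z0 l" and ?c = "tt z0 l"
    have sub: "?T \<subseteq> {?c..}" by (rule tdom_sub)
    show "loc_abs_cont_on ?T (\<lambda>t. st_eta (zsol z0 t l) e)" if "e \<in> E" for e
      unfolding zsol_def by (rule loc_abs_cont_mono[OF Fl_lac(1)[OF that] sub])
    show "loc_abs_cont_on ?T (\<lambda>t. st_omega (zsol z0 t l) j)" if "j \<in> {1..nN}" for j
      unfolding zsol_def by (rule loc_abs_cont_mono[OF Fl_lac(2)[OF that] sub])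
    show "loc_abs_cont_on ?T (\<lambda>t. st_xs (zsol z0 t l) j i)" if "j \<in> {1..nN}" "i < nd j" for j i
      unfolding zsol_def by (rule loc_abs_cont_mono[OF Fl_lac(3)[OF that] sub])
    show "st_sigma (zsol z0 t l) j = st_sigma (zsol z0 s l) j" for t s j
      by (simp add: zsol_def Fl_sigma)
    show "inLambda nN w0 w1 (zsol z0 t l)" if "t \<in> interior ?T" for t
      using KK_Lambda[OF z0] that interior_subset by blast
    show "AE t in lebesgue. t \<in> ?T \<longrightarrow>
          (\<forall>(i, j)\<in>E. ((\<lambda>s. st_eta (zsol z0 s l) (i, j)) has_real_derivative
                 (st_omega (zsol z0 t l) i - st_omega (zsol z0 t l) j)) (at t within ?T)) \<and>
          (\<forall>j\<in>{1..nN}.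
             ((\<lambda>s. st_omega (zsol z0 s l) j) has_real_derivative
                 omega_rhs E M pL B dbar nd g (zsol z0 t l) j) (at t within ?T) \<and>
             (\<forall>i<nd j. ((\<lambda>s. st_xs (zsol z0 s l) j i) has_real_derivative
                 f j (trunc (nd j) (st_xs (zsol z0 t l) j)) (- st_omega (zsol z0 t l) j) i) (at t within ?T)))"
    proof (rule AE_I2, intro impI conjI ballI allI)
      fix t assume t: "t \<in> ?T"
      then have ct: "?c \<le> t" using sub by auto
      have E1: "((\<lambda>s. st_eta (zsol z0 s l) (i, j)) has_real_derivative
                 (st_omega (zsol z0 t l) i - st_omega (zsol z0 t l) j)) (at t within ?T)" if "(i, j) \<in> E" for i j
        unfolding zsol_def by (rule DERIV_subset[OF Fl_deriv_eta[OF ct that] sub])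
      then show "case x of (i, j) \<Rightarrow> ((\<lambda>s. st_eta (zsol z0 s l) (i, j)) has_real_derivative
                 (st_omega (zsol z0 t l) i - st_omega (zsol z0 t l) j)) (at t within ?T)" if "x \<in> E" for x
        using that by (cases x) auto
      show "((\<lambda>s. st_omega (zsol z0 s l) j) has_real_derivative
                 omega_rhs E M pL B dbar nd g (zsol z0 t l) j) (at t within ?T)" if "j \<in> {1..nN}" for j
        unfolding zsol_def by (rule DERIV_subset[OF Fl_deriv_omega[OF ct that] sub])
      show "((\<lambda>s. st_xs (zsol z0 s l) j i) has_real_derivative
                 f j (trunc (nd j) (st_xs (zsol z0 t l) j)) (- st_omega (zsol z0 t l) j) i) (at t within ?T)"
        if "j \<in> {1..nN}" "i < nd j" for j i
        unfolding zsol_def by (rule DERIV_subset[OF Fl_deriv_xs[OF ct that] sub])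
    qed
    fix t assume tt2: "(t, l) \<in> KK z0 \<and> (t, Suc l) \<in> KK z0"
    then have H: "\<forall>m<Suc l. \<not> stop z0 m" "t \<le> tt z0 (Suc l)" "tt z0 (Suc l) \<le> t" "\<forall>m<l. \<not> stop z0 m"
      by (auto simp: KK_def)
    then have ns: "\<not> stop z0 l" and teq: "t = hit ?s ?c" by (auto simp: tt_Suc)
    have L: "inLambda nN w0 w1 ?s" by (rule stt_Lambda[OF z0 H(4)])
    show "inD nN w0 w1 (zsol z0 t l)"
      unfolding zsol_def teq using stage_D[OF L] ns by (simp add: stop_def)
    have "zsol z0 t (Suc l) = stt z0 (Suc l)"
      using H(2,3) by (simp add: zsol_def Fl_init)
    also have "\<dots> = jumpst w0 w1 (zsol z0 t l)" by (simp add: stt_Suc zsol_def teq)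
    finally show "is_jump nN E nd w0 w1 (zsol z0 t l) (zsol z0 t (Suc l))"
      by (simp add: jump_is_jump)
  qed
  have hs: "is_hybrid_solution nN E M pL B nd f g dbar w0 w1 (KK z0) (zsol z0)"
    unfolding is_hybrid_solution_def
    apply (rule conjI, rule KK_htd)
    apply (rule conjI, rule in00)
    apply (rule conjI, use z0 z00 in simp)
    apply (rule allI, rule per_l)
    done
  show ?thesis using hs z00 KK_complete by blast
qed

end

theorem lemma4:
  fixes nN :: nat and E :: "(nat \<times> nat) set"
    and M pL dbar w0 w1 :: "nat \<Rightarrow> real" and B :: "nat \<times> nat \<Rightarrow> real"
    and nd :: "nat \<Rightarrow> nat"
    and f :: "nat \<Rightarrow> (nat \<Rightarrow> real) \<Rightarrow> real \<Rightarrow> (nat \<Rightarrow> real)"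
    and g :: "nat \<Rightarrow> (nat \<Rightarrow> real) \<Rightarrow> real \<Rightarrow> real"
    and z0 :: hstate
  assumes "network_graph nN E"
    and "\<forall>j\<in>{1..nN}. M j > 0"
    and "\<forall>e\<in>E. B e > 0"
    and "\<forall>j\<in>{1..nN}. dbar j \<ge> 0"
    and "\<forall>j\<in>{1..nN}. 0 < w0 j \<and> w0 j < w1 j"
    and "\<forall>j\<in>{1..nN}. lipschitz_vec (nd j) (f j)"
    and "\<forall>j\<in>{1..nN}. lipschitz_scal (nd j) (g j)"
    and "inLambda nN w0 w1 z0"
  shows "\<exists>K z. is_hybrid_solution nN E M pL B nd f g dbar w0 w1 K z \<and>
               z 0 0 = z0 \<and> complete_domain K"
proof -
  have netE: "E \<subseteq> {1..nN} \<times> {1..nN}" using assms(1) by (simp add: network_graph_def)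
  interpret H: hyb nN E M pL dbar B nd f g w0 w1
    by unfold_locales (use netE assms(2,5,6,7) in auto)
  show ?thesis using H.main[OF assms(8)] by blast
qed

end
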